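(* Let $\mathfrak{m}$ be a maximal ideal of $K(\!(\mathbf{t})\!)^\circ$. Then the composition of the inclusion $K\hookrightarrow K(\!(\mathbf{t})\!)^\circ$ with the quotient map $K(\!(\mathbf{t})\!)^\circ\to K(\!(\mathbf{t})\!)^\circ/\mathfrak{m}$ is an isomorphism; consequently $K(\!(\mathbf{t})\!)^\circ/\mathfrak{m}\cong K$.
   Context: $K$ is a field of characteristic zero, $\mathbf{t}=(t_1,\dots,t_m)$, $K(\!(\mathbf{t})\!)=\operatorname{Frac}K[\![\mathbf{t}]\!]$. $V\mathbb{B}[\mathbf{t}]$ is the semiring of subsets of $\mathbb{N}^m$ equal to the vertex set of their Newton polyhedron $\operatorname{conv}(\cdot)+\mathbb{R}^m_{\ge0}$, with $a\oplus b$ = vertices of the Newton polyhedron of $a\cup b$, $a\odot b$ = vertices of that of $a+b$; $V\mathbb{B}(\mathbf{t})$ is its fraction semifield, ordered by $a/b\le c/d$ iff $a\odot d\oplus b\odot c=b\odot c$. $\operatorname{trop}(f)$ is the vertex set of the Newton polyhedron of $\operatorname{Supp}(f)$, $\operatorname{trop}(f/g)=\operatorname{trop}(f)/\operatorname{trop}(g)$, and $K(\!(\mathbf{t})\!)^\circ=\{q:\operatorname{trop}(q)\le1\}$, a subring containing $K$. *)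

theory Defs
  imports "HOL-Analysis.Analysis" "HOL-Algebra.QuotRing"
begin

text \<open>Variables t_i are indexed by a finite type 'n (so m = CARD('n)).
  Exponent vectors are functions 'n => nat; a formal power series in K[[t]]
  is an arbitrary coefficient function ('n => nat) => 'k.\<close>

type_synonym ('n, 'k) mps = "('n \<Rightarrow> nat) \<Rightarrow> 'k"

definition ps_zero :: "('n, 'k::field) mps" where
  "ps_zero = (\<lambda>e. 0)"

definition ps_const :: "'k::field \<Rightarrow> ('n, 'k) mps" where
  "ps_const c = (\<lambda>e. if e = (\<lambda>i. 0) then c else 0)"

definition ps_add :: "('n, 'k::field) mps \<Rightarrow> ('n, 'k) mps \<Rightarrow> ('n, 'k) mps" where
  "ps_add f g = (\<lambda>e. f e + g e)"

definition ps_mult :: "('n::finite, 'k::field) mps \<Rightarrow> ('n, 'k) mps \<Rightarrow> ('n, 'k) mps" where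
  "ps_mult f g = (\<lambda>e. \<Sum>a\<in>{a. \<forall>i. a i \<le> e i}. f a * g (\<lambda>i. e i - a i))"

text \<open>The fraction field K((t)) = Frac K[[t]]: classes of pairs (f, g), g \<noteq> 0.\<close>

definition frac_rel :: "('n::finite, 'k::field) mps \<times> ('n, 'k) mps \<Rightarrow> ('n, 'k) mps \<times> ('n, 'k) mps \<Rightarrow> bool" where
  "frac_rel p q \<longleftrightarrow> snd p \<noteq> ps_zero \<and> snd q \<noteq> ps_zero \<and>
     ps_mult (fst p) (snd q) = ps_mult (fst q) (snd p)"

definition frac_class :: "('n::finite, 'k::field) mps \<times> ('n, 'k) mps \<Rightarrow> (('n, 'k) mps \<times> ('n, 'k) mps) set" where
  "frac_class p = {q. frac_rel p q}"

definition laurent_set :: "(('n::finite, 'k::field) mps \<times> ('n, 'k) mps) set set" where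
  "laurent_set = {frac_class p | p. snd p \<noteq> ps_zero}"

definition frac_rep :: "(('n::finite, 'k::field) mps \<times> ('n, 'k) mps) set \<Rightarrow> ('n, 'k) mps \<times> ('n, 'k) mps" where
  "frac_rep q = (SOME p. p \<in> q)"

definition frac_add where
  "frac_add q r = frac_class
     (ps_add (ps_mult (fst (frac_rep q)) (snd (frac_rep r))) (ps_mult (fst (frac_rep r)) (snd (frac_rep q))),
      ps_mult (snd (frac_rep q)) (snd (frac_rep r)))"

definition frac_mult where
  "frac_mult q r = frac_class
     (ps_mult (fst (frac_rep q)) (fst (frac_rep r)), ps_mult (snd (frac_rep q)) (snd (frac_rep r)))"

definition frac_of_const :: "'k::field \<Rightarrow> (('n::finite, 'k) mps \<times> ('n, 'k) mps) set" where
  "frac_of_const c = frac_class (ps_const c, ps_const 1)"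

definition emb :: "('n::finite \<Rightarrow> nat) \<Rightarrow> real^'n" where
  "emb e = (\<chi> i. real (e i))"

definition newton :: "('n::finite \<Rightarrow> nat) set \<Rightarrow> (real^'n) set" where
  "newton S = {x + y | x y. x \<in> convex hull (emb ` S) \<and> (\<forall>i. 0 \<le> y $ i)}"

definition vert :: "('n::finite \<Rightarrow> nat) set \<Rightarrow> ('n \<Rightarrow> nat) set" where
  "vert S = {e. emb e extreme_point_of newton S}"

definition VB_add :: "('n::finite \<Rightarrow> nat) set \<Rightarrow> ('n \<Rightarrow> nat) set \<Rightarrow> ('n \<Rightarrow> nat) set" where
  "VB_add a b = vert (a \<union> b)"

definition VB_mult :: "('n::finite \<Rightarrow> nat) set \<Rightarrow> ('n \<Rightarrow> nat) set \<Rightarrow> ('n \<Rightarrow> nat) set" where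
  "VB_mult a b = vert {(\<lambda>i. x i + y i) | x y. x \<in> a \<and> y \<in> b}"

definition VB_one :: "('n::finite \<Rightarrow> nat) set" where
  "VB_one = {\<lambda>i. 0}"

definition VB_frac_le :: "('n::finite \<Rightarrow> nat) set \<times> ('n \<Rightarrow> nat) set \<Rightarrow> ('n \<Rightarrow> nat) set \<times> ('n \<Rightarrow> nat) set \<Rightarrow> bool" where
  "VB_frac_le ab cd \<longleftrightarrow>
     VB_add (VB_mult (fst ab) (snd cd)) (VB_mult (snd ab) (fst cd)) = VB_mult (snd ab) (fst cd)"

definition trop :: "('n::finite, 'k::field) mps \<Rightarrow> ('n \<Rightarrow> nat) set" where
  "trop f = vert {e. f e \<noteq> 0}"

definition Kcirc_set :: "(('n::finite, 'k::field) mps \<times> ('n, 'k) mps) set set" where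
  "Kcirc_set = {q \<in> laurent_set. \<exists>p\<in>q. VB_frac_le (trop (fst p), trop (snd p)) (VB_one, VB_one)}"

definition Kcirc :: "(('n::finite, 'k::field) mps \<times> ('n, 'k) mps) set ring" where
  "Kcirc = \<lparr>carrier = Kcirc_set, monoid.mult = frac_mult, one = frac_of_const 1,
            zero = frac_of_const 0, add = frac_add\<rparr>"

definition type_ring :: "'k::field ring" where
  "type_ring = \<lparr>carrier = UNIV, monoid.mult = (*), one = 1, zero = 0, add = (+)\<rparr>"

end

theory Submission
  imports Defs "HOL-Library.Function_Algebras" "HOL-Computational_Algebra.Fraction_Field"
begin

definition orth :: "(real^'n::finite) set" where "orth = {y. \<forall>i. 0 \<le> y $ i}"

lemma newton_alt: "newton S = convex hull (emb ` S) + orth"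
proof
  show "newton S \<subseteq> convex hull (emb ` S) + orth"
  proof
    fix z assume "z \<in> newton S"
    then obtain x y where "z = x + y" "x \<in> convex hull (emb ` S)" "\<forall>i. 0 \<le> y $ i" unfolding newton_def by blast
    thus "z \<in> convex hull (emb ` S) + orth" unfolding orth_def by (simp add: set_plus_intro)
  qed
  show "convex hull (emb ` S) + orth \<subseteq> newton S"
  proof
    fix z assume "z \<in> convex hull (emb ` S) + orth"
    then obtain x y where "z = x + y" "x \<in> convex hull (emb ` S)" "\<forall>i. 0 \<le> y $ i" unfolding orth_def set_plus_def by blast
    thus "z \<in> newton S" unfolding newton_def by blast
  qed
qed

lemma convex_orth: "convex (orth :: (real^'n::finite) set)"
  unfolding orth_def convex_def by (auto intro!: add_nonneg_nonneg mult_nonneg_nonneg)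

lemma orth_add: "x \<in> orth \<Longrightarrow> y \<in> orth \<Longrightarrow> x + y \<in> orth"
  unfolding orth_def by auto

lemma zero_orth: "0 \<in> orth" unfolding orth_def by auto

lemma convex_newton: "convex (newton S)"
  unfolding newton_alt by (rule convex_set_plus[OF convex_convex_hull convex_orth])

lemma newton_up: assumes "x \<in> newton S" "y \<in> orth" shows "x + y \<in> newton S"
proof -
  obtain c q where c: "c \<in> convex hull (emb ` S)" and q: "q \<in> orth" and x: "x = c + q"
    using assms(1) unfolding newton_alt by (auto elim!: set_plus_elim)
  have "x + y = c + (q + y)" using x by (simp add: add.assoc)
  moreover have "c + (q + y) \<in> convex hull (emb ` S) + orth"
    by (rule set_plus_intro[OF c orth_add[OF q assms(2)]])
  ultimately show ?thesis unfolding newton_alt by (simp add: add.assoc)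
qed

lemma emb_in_newton: assumes "e \<in> S" shows "emb e \<in> newton S"
proof -
  have "emb e \<in> convex hull (emb ` S)" by (rule hull_inc) (simp add: assms)
  hence "emb e + 0 \<in> convex hull (emb ` S) + orth" by (rule set_plus_intro[OF _ zero_orth])
  thus ?thesis unfolding newton_alt by simp
qed

lemma newton_min:
  assumes "emb ` S \<subseteq> newton T" shows "newton S \<subseteq> newton T"
proof
  fix x assume "x \<in> newton S"
  then obtain c q where c: "c \<in> convex hull (emb ` S)" and q: "q \<in> orth" and x: "x = c + q"
    unfolding newton_alt by (auto elim!: set_plus_elim)
  have "convex hull (emb ` S) \<subseteq> newton T"
    by (rule hull_minimal[where S=convex, OF assms convex_newton[of T]])
  hence "c \<in> newton T" using c by (rule subsetD)
  thus "x \<in> newton T" unfolding x by (rule newton_up[OF _ q])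
qed

lemma newton_mono: "S \<subseteq> T \<Longrightarrow> newton S \<subseteq> newton T"
  by (rule newton_min) (auto intro: emb_in_newton)

lemma emb_add: "emb (a + b) = emb a + emb b"
  unfolding emb_def by (simp add: vec_eq_iff)

lemma emb_inj: "emb a = emb b \<Longrightarrow> a = b"
  unfolding emb_def by (auto simp: vec_eq_iff fun_eq_iff)

lemma emb_image_plus: "emb ` (A + B) = emb ` A + emb ` B"
proof
  show "emb ` (A + B) \<subseteq> emb ` A + emb ` B"
  proof
    fix z assume "z \<in> emb ` (A + B)"
    then obtain a b where "a \<in> A" "b \<in> B" "z = emb (a + b)" unfolding set_plus_def by blast
    thus "z \<in> emb ` A + emb ` B" unfolding emb_add by (simp add: set_plus_intro)
  qed
  show "emb ` A + emb ` B \<subseteq> emb ` (A + B)"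
  proof
    fix z assume "z \<in> emb ` A + emb ` B"
    then obtain a b where "a \<in> A" "b \<in> B" "z = emb a + emb b" unfolding set_plus_def by blast
    hence "z = emb (a + b)" by (simp add: emb_add)
    thus "z \<in> emb ` (A + B)" using \<open>a \<in> A\<close> \<open>b \<in> B\<close> by (simp add: set_plus_intro)
  qed
qed

lemma newton_plus:
  assumes "x \<in> newton A" "y \<in> newton B" shows "x + y \<in> newton (A + B)"
proof -
  obtain c q where c: "c \<in> convex hull (emb ` A)" and q: "q \<in> orth" and x: "x = c + q"
    using assms(1) unfolding newton_alt by (auto elim!: set_plus_elim)
  obtain d r where d: "d \<in> convex hull (emb ` B)" and r: "r \<in> orth" and y: "y = d + r"
    using assms(2) unfolding newton_alt by (auto elim!: set_plus_elim)
  have "c + d \<in> convex hull (emb ` (A + B))"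
    unfolding emb_image_plus convex_hull_set_plus using c d by (auto simp: set_plus_def)
  moreover have "x + y = (c + d) + (q + r)" using x y by (simp add: algebra_simps)
  ultimately show ?thesis unfolding newton_alt set_plus_def using orth_add[OF q r] by blast
qed

lemma hull_sub_newton: "convex hull (emb ` S) \<subseteq> newton S"
proof (rule hull_minimal)
  show "emb ` S \<subseteq> newton S" by (auto simp: image_subset_iff intro: emb_in_newton)
  show "convex (newton S)" by (rule convex_newton)
qed

lemma vert_sub: "vert S \<subseteq> S"
proof
  fix e assume "e \<in> vert S"
  hence ext: "emb e extreme_point_of newton S" by (simp add: vert_def)
  hence "emb e \<in> newton S" by (simp add: extreme_point_of_def)
  then obtain c q where c: "c \<in> convex hull (emb ` S)" and q: "q \<in> orth" and x: "emb e = c + q"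
    unfolding newton_alt by (auto elim!: set_plus_elim)
  have cN: "c \<in> newton S" using c hull_sub_newton by blast
  have q0: "q = 0"
  proof (rule ccontr)
    assume "q \<noteq> 0"
    have o1: "(1/2) *\<^sub>R q \<in> orth" "(3/2) *\<^sub>R q \<in> orth" using q unfolding orth_def by auto
    have a: "c + (1/2) *\<^sub>R q \<in> newton S" "c + (3/2) *\<^sub>R q \<in> newton S"
      using newton_up[OF cN o1(1)] newton_up[OF cN o1(2)] by auto
    have "midpoint (c + (1/2) *\<^sub>R q) (c + (3/2) *\<^sub>R q) = emb e"
      unfolding midpoint_def x by (simp add: vec_eq_iff algebra_simps)
    moreover have "c + (1/2) *\<^sub>R q \<noteq> c + (3/2) *\<^sub>R q" using \<open>q \<noteq> 0\<close> by simp
    ultimately have "emb e \<in> open_segment (c + (1/2) *\<^sub>R q) (c + (3/2) *\<^sub>R q)"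
      by (metis midpoint_in_open_segment)
    with ext a show False unfolding extreme_point_of_def by blast
  qed
  have ec: "emb e \<in> convex hull (emb ` S)" using c x q0 by simp
  have "emb e extreme_point_of convex hull (emb ` S)"
    unfolding extreme_point_of_def
  proof (intro conjI ballI ec)
    fix a b assume "a \<in> convex hull (emb ` S)" "b \<in> convex hull (emb ` S)"
    hence "a \<in> newton S" "b \<in> newton S" using hull_sub_newton by blast+
    thus "emb e \<notin> open_segment a b" using ext unfolding extreme_point_of_def by blast
  qed
  hence "emb e \<in> emb ` S" by (rule extreme_point_of_convex_hull)
  thus "e \<in> S" using emb_inj by blast
qed

lemma orth_iff: "y \<in> orth \<longleftrightarrow> (\<forall>i. 0 \<le> y $ i)" by (simp add: orth_def)

lemma not_vert_in_rest:
  assumes fin: "finite P" and p: "p \<in> P" and nv: "\<not> emb p extreme_point_of newton P"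
  shows "emb p \<in> newton (P - {p})"
proof (cases "emb p \<in> convex hull (emb ` (P - {p}))")
  case True
  thus ?thesis using hull_sub_newton[of "P - {p}"] by (rule rev_subsetD)
next
  case False
  have eP: "emb ` P = insert (emb p) (emb ` (P - {p}))" using p by blast
  have ext: "emb p extreme_point_of convex hull (emb ` P)"
    unfolding eP by (rule extreme_point_of_convex_hull_insert) (use fin False in auto)
  have pin: "emb p \<in> newton P" by (rule emb_in_newton[OF p])
  from nv pin obtain a b where a: "a \<in> newton P" and b: "b \<in> newton P" and seg: "emb p \<in> open_segment a b"
    unfolding extreme_point_of_def by auto
  from a obtain ca ya where ca: "ca \<in> convex hull (emb ` P)" and ya: "ya \<in> orth" and a': "a = ca + ya"
    unfolding newton_alt by (auto elim!: set_plus_elim)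
  from b obtain cb yb where cb: "cb \<in> convex hull (emb ` P)" and yb: "yb \<in> orth" and b': "b = cb + yb"
    unfolding newton_alt by (auto elim!: set_plus_elim)
  from seg obtain u where u: "0 < u" "u < 1" and ab: "a \<noteq> b" and eq: "emb p = (1 - u) *\<^sub>R a + u *\<^sub>R b"
    unfolding in_segment by auto
  define c where "c = (1 - u) *\<^sub>R ca + u *\<^sub>R cb"
  define y where "y = (1 - u) *\<^sub>R ya + u *\<^sub>R yb"
  have cin: "c \<in> convex hull (emb ` P)" unfolding c_def
    by (rule convexD[OF convex_convex_hull ca cb]) (use u in auto)
  have yin: "y \<in> orth" using ya yb u unfolding y_def orth_iff by (auto intro!: add_nonneg_nonneg mult_nonneg_nonneg)
  have ep: "emb p = c + y" unfolding eq a' b' c_def y_def by (simp add: algebra_simps)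
  have cne: "c \<noteq> emb p"
  proof
    assume ce: "c = emb p"
    hence y0: "y = 0" using ep by simp
    have "ya = 0 \<and> yb = 0"
    proof -
      have "\<forall>i. ya $ i = 0 \<and> yb $ i = 0"
      proof
        fix i
        have "(1 - u) * ya $ i + u * yb $ i = 0" using y0 unfolding y_def by (simp add: vec_eq_iff)
        moreover have "0 \<le> (1 - u) * ya $ i" "0 \<le> u * yb $ i" using ya yb u unfolding orth_iff by auto
        ultimately have "(1 - u) * ya $ i = 0" "u * yb $ i = 0" by linarith+
        thus "ya $ i = 0 \<and> yb $ i = 0" using u by auto
      qed
      thus ?thesis by (simp add: vec_eq_iff)
    qed
    hence "a = ca" "b = cb" using a' b' by auto
    hence "emb p \<in> open_segment ca cb" using seg by simp
    with ext ca cb show False unfolding extreme_point_of_def by blast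
  qed
  show ?thesis
  proof (cases "P - {p} = {}")
    case True
    have "emb ` P = {emb p}" using eP unfolding True by simp
    hence "c = emb p" using cin by simp
    with cne show ?thesis by simp
  next
    case ne: False
    from cin obtain s t d where st: "0 \<le> s" "0 \<le> t" "s + t = 1" and d: "d \<in> convex hull (emb ` (P - {p}))"
      and cd: "c = s *\<^sub>R emb p + t *\<^sub>R d"
      unfolding eP convex_hull_insert[OF ne[folded image_is_empty[of emb]]] by blast
    have t0: "t \<noteq> 0"
    proof
      assume "t = 0" hence "s = 1" using st by simp
      hence "c = emb p" using cd \<open>t = 0\<close> by simp
      with cne show False by simp
    qed
    have e1: "emb p = s *\<^sub>R emb p + (t *\<^sub>R d + y)" using ep cd by (simp add: algebra_simps)
    have "t = 1 - s" using st by simp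
    hence "t *\<^sub>R emb p = emb p - s *\<^sub>R emb p" by (simp add: scaleR_diff_left)
    also have "\<dots> = t *\<^sub>R d + y" using e1 by (metis add_diff_cancel_left')
    finally have "t *\<^sub>R emb p = t *\<^sub>R d + y" .
    hence "emb p = d + (1 / t) *\<^sub>R y" using t0
      by (metis (no_types, lifting) divide_inverse_commute divide_self_if mult_cancel_right1 scaleR_add_right scaleR_one scaleR_scaleR)
    moreover have "(1 / t) *\<^sub>R y \<in> orth" using yin st unfolding orth_iff by simp
    moreover have "d \<in> newton (P - {p})" using d hull_sub_newton by (rule rev_subsetD)
    ultimately show ?thesis using newton_up by metis
  qed
qed


lemma vert_cong: "newton S = newton T \<Longrightarrow> vert S = vert T"
  by (simp add: vert_def)

lemma newton_vert_finite:
  assumes "finite P" shows "newton (vert P) = newton P"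
  using assms
proof (induction "card P" arbitrary: P rule: less_induct)
  case less
  show ?case
  proof (cases "\<forall>p\<in>P. emb p extreme_point_of newton P")
    case True
    hence "P \<subseteq> vert P" by (auto simp: vert_def)
    hence "vert P = P" using vert_sub by (rule subset_antisym[rotated])
    thus ?thesis by simp
  next
    case False
    then obtain p where p: "p \<in> P" and nv: "\<not> emb p extreme_point_of newton P" by blast
    have pin: "emb p \<in> newton (P - {p})" by (rule not_vert_in_rest[OF less.prems p nv])
    have eqn: "newton P = newton (P - {p})"
    proof (rule subset_antisym)
      show "newton P \<subseteq> newton (P - {p})"
      proof (rule newton_min, rule image_subsetI)
        fix x assume "x \<in> P"
        show "emb x \<in> newton (P - {p})"
        proof (cases "x = p")
          case True thus ?thesis using pin by simp
        next
          case False thus ?thesis using \<open>x \<in> P\<close> by (intro emb_in_newton) simp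
        qed
      qed
      show "newton (P - {p}) \<subseteq> newton P" by (rule newton_mono) blast
    qed
    have "card (P - {p}) < card P" by (rule card_Diff1_less[OF less.prems p])
    hence IH: "newton (vert (P - {p})) = newton (P - {p})"
      using less.hyps less.prems by simp
    have "vert P = vert (P - {p})" by (rule vert_cong[OF eqn])
    thus ?thesis using IH eqn by simp
  qed
qed

lemma dickson_aux:
  fixes I :: "'a set"
  assumes "finite I"
  shows "\<forall>A :: ('a \<Rightarrow> nat) set. (\<forall>a\<in>A. \<forall>b\<in>A. (\<forall>i\<in>I. a i \<le> b i) \<longrightarrow> (\<forall>i\<in>I. a i = b i))
     \<longrightarrow> finite ((\<lambda>a. restrict a I) ` A)"
  using assms
proof (induction "card I" arbitrary: I rule: less_induct)
  case (less I)
  show ?case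
  proof (intro allI impI)
  fix A :: "('a \<Rightarrow> nat) set"
  assume anti: "\<forall>a\<in>A. \<forall>b\<in>A. (\<forall>i\<in>I. a i \<le> b i) \<longrightarrow> (\<forall>i\<in>I. a i = b i)"
  show "finite ((\<lambda>a. restrict a I) ` A)"
  proof (cases "A = {}")
    case True thus ?thesis by simp
  next
    case False
    then obtain a0 where a0: "a0 \<in> A" by blast
    define F where "F i k = {b \<in> A. b i = k}" for i k
    have sub: "(\<lambda>a. restrict a I) ` A \<subseteq> insert (restrict a0 I)
       (\<Union>i\<in>I. \<Union>k\<in>{..<a0 i}. (\<lambda>r. r(i := k)) ` ((\<lambda>a. restrict a (I - {i})) ` F i k))"
    proof (rule image_subsetI)
      fix b assume b: "b \<in> A"
      show "restrict b I \<in> insert (restrict a0 I)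
       (\<Union>i\<in>I. \<Union>k\<in>{..<a0 i}. (\<lambda>r. r(i := k)) ` ((\<lambda>a. restrict a (I - {i})) ` F i k))"
      proof (cases "\<forall>i\<in>I. a0 i \<le> b i")
        case True
        hence "\<forall>i\<in>I. a0 i = b i" using anti a0 b by blast
        hence "restrict b I = restrict a0 I" by (auto simp: restrict_def fun_eq_iff)
        thus ?thesis by simp
      next
        case False
        then obtain i where i: "i \<in> I" "b i < a0 i" by (auto simp: not_le)
        have "restrict b I = (restrict b (I - {i}))(i := b i)"
          using i by (auto simp: restrict_def fun_eq_iff)
        moreover have "b \<in> F i (b i)" using b by (simp add: F_def)
        ultimately show ?thesis using i by blast
      qed
    qed
    have fin: "finite ((\<lambda>a. restrict a (I - {i})) ` F i k)" if i: "i \<in> I" for i k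
    proof -
      have "card (I - {i}) < card I" by (rule card_Diff1_less[OF less.prems i])
      moreover have "finite (I - {i})" using less.prems by simp
      moreover have "\<forall>a\<in>F i k. \<forall>b\<in>F i k. (\<forall>j\<in>I - {i}. a j \<le> b j) \<longrightarrow> (\<forall>j\<in>I - {i}. a j = b j)"
      proof (intro ballI impI)
        fix a b j assume a: "a \<in> F i k" and b: "b \<in> F i k" and le: "\<forall>j\<in>I - {i}. a j \<le> b j"
          and j: "j \<in> I - {i}"
        have "\<forall>j\<in>I. a j \<le> b j" using le a b by (auto simp: F_def)
        hence "\<forall>j\<in>I. a j = b j" using anti a b by (auto simp: F_def)
        thus "a j = b j" using j by blast
      qed
      ultimately show ?thesis using less.hyps by blast
    qed
    show ?thesis
      by (rule finite_subset[OF sub]) (use fin less.prems in auto)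
  qed
  qed
qed

lemma finite_antichain:
  fixes A :: "('n::finite \<Rightarrow> nat) set"
  assumes "\<forall>a\<in>A. \<forall>b\<in>A. a \<le> b \<longrightarrow> a = b"
  shows "finite A"
proof -
  have "\<forall>a\<in>A. \<forall>b\<in>A. (\<forall>i\<in>UNIV. a i \<le> b i) \<longrightarrow> (\<forall>i\<in>UNIV. a i = b i)"
    using assms by (auto simp: le_fun_def)
  hence "finite ((\<lambda>a. restrict a UNIV) ` A)" using dickson_aux[of "UNIV :: 'n set"] by auto
  moreover have "(\<lambda>a. restrict a UNIV) ` A = A" by (simp add: restrict_def)
  ultimately show ?thesis by simp
qed

definition mins :: "('n::finite \<Rightarrow> nat) set \<Rightarrow> ('n \<Rightarrow> nat) set" where
  "mins S = {s \<in> S. \<forall>t\<in>S. t \<le> s \<longrightarrow> t = s}"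

lemma mins_sub: "mins S \<subseteq> S" by (auto simp: mins_def)

lemma finite_mins: "finite (mins S)"
  by (rule finite_antichain) (auto simp: mins_def)

lemma le_sum_eq:
  fixes t m :: "'n::finite \<Rightarrow> nat"
  assumes "t \<le> m" "(\<Sum>i\<in>UNIV. m i) \<le> (\<Sum>i\<in>UNIV. t i)"
  shows "t = m"
proof (rule ccontr)
  assume "t \<noteq> m"
  then obtain i where "t i \<noteq> m i" by (auto simp: fun_eq_iff)
  hence "t i < m i" using assms(1) by (auto simp: le_fun_def order.order_iff_strict)
  hence "(\<Sum>i\<in>UNIV. t i) < (\<Sum>i\<in>UNIV. m i)"
    using assms(1) by (intro sum_strict_mono_ex1) (auto simp: le_fun_def)
  thus False using assms(2) by simp
qed

lemma mins_below:
  assumes "s \<in> S" shows "\<exists>m\<in>mins S. m \<le> s"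
proof -
  obtain m where m: "m \<in> S \<and> m \<le> s" and least: "\<And>t. t \<in> S \<and> t \<le> s \<Longrightarrow> (\<Sum>i\<in>UNIV. m i) \<le> (\<Sum>i\<in>UNIV. t i)"
    using ex_has_least_nat[of "\<lambda>t. t \<in> S \<and> t \<le> s" s "\<lambda>t. \<Sum>i\<in>UNIV. t i"] assms by auto
  have "m \<in> mins S"
    unfolding mins_def
  proof (intro CollectI conjI ballI impI)
    show "m \<in> S" using m by simp
    fix t assume t: "t \<in> S" "t \<le> m"
    have "t \<le> s" using t(2) m order_trans by blast
    hence "(\<Sum>i\<in>UNIV. m i) \<le> (\<Sum>i\<in>UNIV. t i)" using least t(1) by blast
    thus "t = m" using le_sum_eq[OF t(2)] by simp
  qed
  thus ?thesis using m by blast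
qed

lemma emb_le_orth: "m \<le> s \<Longrightarrow> emb s - emb m \<in> orth"
  by (auto simp: orth_iff emb_def le_fun_def)

lemma newton_mins: "newton (mins S) = newton S"
proof (rule subset_antisym)
  show "newton (mins S) \<subseteq> newton S" by (rule newton_mono[OF mins_sub])
  show "newton S \<subseteq> newton (mins S)"
  proof (rule newton_min, rule image_subsetI)
    fix s assume "s \<in> S"
    then obtain m where m: "m \<in> mins S" "m \<le> s" using mins_below by blast
    have "emb m + (emb s - emb m) \<in> newton (mins S)"
      by (rule newton_up[OF emb_in_newton[OF m(1)] emb_le_orth[OF m(2)]])
    thus "emb s \<in> newton (mins S)" by simp
  qed
qed

lemma vert_mins: "vert S = vert (mins S)"
  by (rule vert_cong) (simp add: newton_mins)

lemma newton_vert: "newton (vert S) = newton S"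
  using newton_vert_finite[OF finite_mins, of S] by (simp add: vert_mins[symmetric] newton_mins)

lemma finite_vert: "finite (vert S)"
  using vert_sub[of "mins S"] finite_mins[of S] by (simp add: vert_mins[symmetric] finite_subset)

lemma vert_vert: "vert (vert S) = vert S"
  by (rule vert_cong[OF newton_vert])

lemma newton_empty: "newton {} = {}"
  by (simp add: newton_def)

lemma vert_nonempty: "S \<noteq> {} \<Longrightarrow> vert S \<noteq> {}"
proof
  assume "S \<noteq> {}" "vert S = {}"
  then obtain s where "s \<in> S" by blast
  hence "emb s \<in> newton S" by (rule emb_in_newton)
  hence "emb s \<in> newton (vert S)" by (simp add: newton_vert)
  thus False using \<open>vert S = {}\<close> by (simp add: newton_empty)
qed

lemma newton_union_vert: "newton (vert A \<union> vert B) = newton (A \<union> B)"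
proof (rule subset_antisym)
  show "newton (vert A \<union> vert B) \<subseteq> newton (A \<union> B)"
    by (rule newton_mono) (use vert_sub in blast)
  show "newton (A \<union> B) \<subseteq> newton (vert A \<union> vert B)"
  proof (rule newton_min)
    have "emb ` A \<subseteq> newton (vert A)" using newton_vert[of A] emb_in_newton by auto
    moreover have "newton (vert A) \<subseteq> newton (vert A \<union> vert B)" by (rule newton_mono) blast
    moreover have "emb ` B \<subseteq> newton (vert B)" using newton_vert[of B] emb_in_newton by auto
    moreover have "newton (vert B) \<subseteq> newton (vert A \<union> vert B)" by (rule newton_mono) blast
    ultimately show "emb ` (A \<union> B) \<subseteq> newton (vert A \<union> vert B)" by blast
  qed
qed

lemma VB_mult_one: "VB_mult a VB_one = vert a"
proof -
  have "{(\<lambda>i. x i + y i) | x y. x \<in> a \<and> y \<in> VB_one} = a" by (auto simp: VB_one_def)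
  thus ?thesis by (simp add: VB_mult_def)
qed

lemma cond_iff_newton:
  "VB_frac_le (vert A, vert B) (VB_one, VB_one) \<longleftrightarrow> emb ` A \<subseteq> newton B"
proof -
  have "VB_frac_le (vert A, vert B) (VB_one, VB_one) \<longleftrightarrow> vert (A \<union> B) = vert B"
    unfolding VB_frac_le_def VB_add_def by (simp add: VB_mult_one vert_vert vert_cong[OF newton_union_vert])
  also have "\<dots> \<longleftrightarrow> emb ` A \<subseteq> newton B"
  proof
    assume "vert (A \<union> B) = vert B"
    hence "newton (A \<union> B) = newton B" by (metis newton_vert)
    moreover have "emb ` A \<subseteq> newton (A \<union> B)" by (auto intro: emb_in_newton)
    ultimately show "emb ` A \<subseteq> newton B" by simp
  next
    assume h: "emb ` A \<subseteq> newton B"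
    have "newton (A \<union> B) = newton B"
    proof (rule subset_antisym)
      show "newton (A \<union> B) \<subseteq> newton B"
        by (rule newton_min) (use h emb_in_newton in auto)
      show "newton B \<subseteq> newton (A \<union> B)" by (rule newton_mono) blast
    qed
    thus "vert (A \<union> B) = vert B" by (rule vert_cong)
  qed
  finally show ?thesis .
qed


lemma vert_sum_unique:
  assumes w: "emb w extreme_point_of newton (A + B)"
    and x: "x \<in> newton A" "x' \<in> newton A" and y: "y \<in> newton B" "y' \<in> newton B"
    and e: "x + y = emb w" "x' + y' = emb w"
  shows "x = x'"
proof -
  have p1: "x + y' \<in> newton (A + B)" by (rule newton_plus[OF x(1) y(2)])
  have p2: "x' + y \<in> newton (A + B)" by (rule newton_plus[OF x(2) y(1)])
  have mid: "midpoint (x + y') (x' + y) = emb w"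
  proof -
    have "midpoint (x + y') (x' + y) = (1/2) *\<^sub>R ((x + y) + (x' + y'))"
      by (simp add: midpoint_def algebra_simps)
    also have "\<dots> = emb w" using e by (simp add: scaleR_2[symmetric])
    finally show ?thesis .
  qed
  have "x + y' = x' + y"
  proof (rule ccontr)
    assume "x + y' \<noteq> x' + y"
    hence "emb w \<in> open_segment (x + y') (x' + y)" using mid midpoint_in_open_segment by metis
    thus False using w p1 p2 unfolding extreme_point_of_def by blast
  qed
  hence eq: "(x + y') + (x' + y') = (x' + y) + (x + y)" using e by simp
  have "\<forall>i. y' $ i = y $ i"
  proof
    fix i
    have "((x + y') + (x' + y')) $ i = ((x' + y) + (x + y)) $ i" using eq by simp
    thus "y' $ i = y $ i" by simp
  qed
  hence "y' = y" by (simp add: vec_eq_iff)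
  hence "x + y = x' + y" using e by simp
  thus "x = x'" by simp
qed

lemma vert_sum_extreme1:
  assumes w: "emb w extreme_point_of newton (A + B)"
    and x: "x \<in> newton A" and y: "y \<in> newton B" and e: "x + y = emb w"
  shows "x extreme_point_of newton A"
  unfolding extreme_point_of_def
proof (intro conjI ballI x)
  fix a b assume a: "a \<in> newton A" and b: "b \<in> newton A"
  show "x \<notin> open_segment a b"
  proof
    assume "x \<in> open_segment a b"
    hence "y + x \<in> open_segment (y + a) (y + b)" by simp
    hence "emb w \<in> open_segment (a + y) (b + y)" using e by (simp add: add.commute)
    moreover have "a + y \<in> newton (A + B)" "b + y \<in> newton (A + B)"
      using newton_plus[OF a y] newton_plus[OF b y] by auto
    ultimately show False using w unfolding extreme_point_of_def by blast
  qed
qed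

lemma vert_sum_extreme2:
  assumes w: "emb w extreme_point_of newton (A + B)"
    and x: "x \<in> newton A" and y: "y \<in> newton B" and e: "x + y = emb w"
  shows "y extreme_point_of newton B"
  unfolding extreme_point_of_def
proof (intro conjI ballI y)
  fix a b assume a: "a \<in> newton B" and b: "b \<in> newton B"
  show "y \<notin> open_segment a b"
  proof
    assume "y \<in> open_segment a b"
    hence "x + y \<in> open_segment (x + a) (x + b)" by simp
    hence "emb w \<in> open_segment (x + a) (x + b)" using e by simp
    moreover have "x + a \<in> newton (A + B)" "x + b \<in> newton (A + B)"
      using newton_plus[OF x a] newton_plus[OF x b] by auto
    ultimately show False using w unfolding extreme_point_of_def by blast
  qed
qed

definition psupp :: "('n::finite, 'k::field) mps \<Rightarrow> ('n \<Rightarrow> nat) set" where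
  "psupp f = {e. f e \<noteq> 0}"

lemma finite_box: "finite {a :: 'n::finite \<Rightarrow> nat. a \<le> e}"
proof -
  have "{a :: 'n \<Rightarrow> nat. a \<le> e} \<subseteq> PiE UNIV (\<lambda>i. {..e i})"
    by (auto simp: le_fun_def PiE_def Pi_def)
  thus ?thesis by (rule finite_subset) (simp add: finite_PiE)
qed

lemma ps_mult_alt: "ps_mult f g e = (\<Sum>a\<in>{a. a \<le> e}. f a * g (e - a))"
  unfolding ps_mult_def by (simp add: le_fun_def fun_diff_def)

lemma le_diff_add: "(a :: 'n \<Rightarrow> nat) \<le> e \<Longrightarrow> a + (e - a) = e"
  by (auto simp: le_fun_def fun_eq_iff)

lemma fle_trans: "(b :: 'n \<Rightarrow> nat) \<le> a \<Longrightarrow> a \<le> e \<Longrightarrow> b \<le> e" by (rule order_trans)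
lemma fle_diff_mono: "(b :: 'n \<Rightarrow> nat) \<le> a \<Longrightarrow> a \<le> e \<Longrightarrow> a - b \<le> e - b"
  unfolding le_fun_def fun_diff_def by (auto intro: diff_le_mono)
lemma fle_add: "(a :: 'n \<Rightarrow> nat) \<le> e \<Longrightarrow> b \<le> e - a \<Longrightarrow> a + b \<le> e"
  unfolding le_fun_def fun_diff_def plus_fun_def by (auto simp: le_diff_conv2 add.commute)
lemma fle_add1: "(a :: 'n \<Rightarrow> nat) \<le> a + b" by (auto simp: le_fun_def plus_fun_def)
lemma fadd_diff: "(a :: 'n \<Rightarrow> nat) + b - a = b" by (auto simp: fun_eq_iff plus_fun_def fun_diff_def)
lemma fdiff_diff: "(a :: 'n \<Rightarrow> nat) \<le> c \<Longrightarrow> e - a - (c - a) = e - c" 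
  by (auto simp: fun_eq_iff le_fun_def fun_diff_def)
lemma fdiff_diff2: "e - a - b = e - ((a :: 'n \<Rightarrow> nat) + b)" 
  by (auto simp: fun_eq_iff plus_fun_def fun_diff_def)

lemma ps_mult_comm: "ps_mult f g = ps_mult g f"
proof (rule ext)
  fix e
  show "ps_mult f g e = ps_mult g f e"
    unfolding ps_mult_alt
  proof (rule sum.reindex_bij_witness[of _ "\<lambda>a. e - a" "\<lambda>a. e - a"])
    fix a assume "a \<in> {a. a \<le> e}"
    hence a: "a \<le> e" by simp
    have ee: "e - (e - a) = a" using a by (auto simp: le_fun_def fun_diff_def fun_eq_iff)
    show "e - (e - a) = a" by (rule ee)
    show "e - a \<in> {a. a \<le> e}" by (auto simp: le_fun_def fun_diff_def)
    show "g (e - a) * f (e - (e - a)) = f a * g (e - a)" by (simp add: ee mult.commute)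
  next
    fix a assume "a \<in> {a. a \<le> e}"
    hence a: "a \<le> e" by simp
    show "e - (e - a) = a" using a by (auto simp: le_fun_def fun_diff_def fun_eq_iff)
    show "e - a \<in> {a. a \<le> e}" by (auto simp: le_fun_def fun_diff_def)
  qed
qed

lemma ps_mult_assoc: "ps_mult (ps_mult f g) h = ps_mult f (ps_mult g h)"
proof (rule ext)
  fix e
  have "ps_mult (ps_mult f g) h e = (\<Sum>c\<in>{c. c \<le> e}. \<Sum>a\<in>{a. a \<le> c}. f a * g (c - a) * h (e - c))"
    unfolding ps_mult_alt by (simp add: sum_distrib_right)
  also have "\<dots> = (\<Sum>(c, a)\<in>Sigma {c. c \<le> e} (\<lambda>c. {a. a \<le> c}). f a * g (c - a) * h (e - c))"
    by (rule sum.Sigma) (auto intro: finite_box)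
  also have "\<dots> = (\<Sum>(a, b)\<in>Sigma {a. a \<le> e} (\<lambda>a. {b. b \<le> e - a}). f a * g b * h (e - a - b))"
  proof (rule sum.reindex_bij_witness[of _ "\<lambda>(a, b). (a + b, a)" "\<lambda>(c, a). (a, c - a)"])
    fix x assume "x \<in> Sigma {c. c \<le> e} (\<lambda>c. {a. a \<le> c})"
    then obtain c a where x: "x = (c, a)" and c: "c \<le> e" and a: "a \<le> c" by blast
    show "(case (case x of (c, a) \<Rightarrow> (a, c - a)) of (a, b) \<Rightarrow> (a + b, a)) = x"
      using x a by (simp add: le_diff_add)
    show "(case x of (c, a) \<Rightarrow> (a, c - a)) \<in> Sigma {a. a \<le> e} (\<lambda>a. {b. b \<le> e - a})"
      using x a c fle_trans[OF a c] fle_diff_mono[OF a c] by simp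
    show "(case (case x of (c, a) \<Rightarrow> (a, c - a)) of (a, b) \<Rightarrow> f a * g b * h (e - a - b)) =
          (case x of (c, a) \<Rightarrow> f a * g (c - a) * h (e - c))"
      using x a by (simp add: fdiff_diff)
  next
    fix y assume "y \<in> Sigma {a. a \<le> e} (\<lambda>a. {b. b \<le> e - a})"
    then obtain a b where y: "y = (a, b)" and a: "a \<le> e" and b: "b \<le> e - a" by blast
    show "(case (case y of (a, b) \<Rightarrow> (a + b, a)) of (c, a) \<Rightarrow> (a, c - a)) = y"
      using y by (simp add: fadd_diff)
    show "(case y of (a, b) \<Rightarrow> (a + b, a)) \<in> Sigma {c. c \<le> e} (\<lambda>c. {a. a \<le> c})"
      using y fle_add[OF a b] fle_add1[of a b] by simp
  qed
  also have "\<dots> = (\<Sum>a\<in>{a. a \<le> e}. \<Sum>b\<in>{b. b \<le> e - a}. f a * g b * h (e - a - b))"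
    by (rule sum.Sigma[symmetric]) (auto intro: finite_box)
  also have "\<dots> = ps_mult f (ps_mult g h) e"
    unfolding ps_mult_alt by (simp add: sum_distrib_left mult.assoc)
  finally show "ps_mult (ps_mult f g) h e = ps_mult f (ps_mult g h) e" .
qed

lemma ps_mult_add_left: "ps_mult (ps_add f g) h = ps_add (ps_mult f h) (ps_mult g h)"
  unfolding ps_mult_def ps_add_def by (simp add: sum.distrib algebra_simps)

lemma ps_mult_const: "ps_mult (ps_const c) f = (\<lambda>e. c * f e)"
proof (rule ext)
  fix e
  have "ps_mult (ps_const c) f e = (\<Sum>a\<in>{a. a \<le> e}. if a = 0 then c * f (e - a) else 0)"
    unfolding ps_mult_alt ps_const_def by (intro sum.cong) (auto simp: zero_fun_def)
  also have "\<dots> = c * f e" by (simp add: sum.delta' finite_box)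
  finally show "ps_mult (ps_const c) f e = c * f e" .
qed

lemma ps_mult_zero: "ps_mult ps_zero f = ps_zero"
  unfolding ps_mult_def ps_zero_def by simp

lemma supp_mult: "psupp (ps_mult f g) \<subseteq> psupp f + psupp g"
proof
  fix v assume "v \<in> psupp (ps_mult f g)"
  hence "(\<Sum>a\<in>{a. a \<le> v}. f a * g (v - a)) \<noteq> 0" by (simp add: psupp_def ps_mult_alt)
  then obtain a where "a \<in> {a. a \<le> v}" "f a * g (v - a) \<noteq> 0" by (rule sum.not_neutral_contains_not_neutral)
  hence a: "a \<le> v" "f a * g (v - a) \<noteq> 0" by auto
  hence "a \<in> psupp f" "v - a \<in> psupp g" by (auto simp: psupp_def)
  moreover have "v = a + (v - a)" using le_diff_add[OF a(1)] by simp
  ultimately show "v \<in> psupp f + psupp g" by (metis set_plus_intro)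
qed

lemma coeff_nonzero:
  assumes "ps_mult f g v \<noteq> 0"
  obtains a where "a \<le> v" "f a \<noteq> 0" "g (v - a) \<noteq> 0"
proof -
  have "(\<Sum>a\<in>{a. a \<le> v}. f a * g (v - a)) \<noteq> 0" using assms by (simp add: ps_mult_alt)
  then obtain a where "a \<in> {a. a \<le> v}" "f a * g (v - a) \<noteq> 0" by (rule sum.not_neutral_contains_not_neutral)
  hence a: "a \<le> v" "f a * g (v - a) \<noteq> 0" by auto
  thus ?thesis using that by auto
qed

lemma vert_coeff:
  assumes v: "v \<in> vert (psupp f + psupp g)"
  shows "ps_mult f g v \<noteq> 0"
proof -
  have ext: "emb v extreme_point_of newton (psupp f + psupp g)" using v by (simp add: vert_def)
  have "v \<in> psupp f + psupp g" using v vert_sub by blast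
  then obtain a0 b0 where ab: "v = a0 + b0" "a0 \<in> psupp f" "b0 \<in> psupp g" by (auto elim!: set_plus_elim)
  have a0v: "a0 \<le> v" using ab by (simp add: le_fun_def)
  have b0: "v - a0 = b0" using ab by (simp add: fun_eq_iff fun_diff_def)
  have "ps_mult f g v = (\<Sum>a\<in>{a. a \<le> v}. f a * g (v - a))" by (simp add: ps_mult_alt)
  also have "\<dots> = f a0 * g (v - a0) + (\<Sum>a\<in>{a. a \<le> v} - {a0}. f a * g (v - a))"
    by (rule sum.remove[OF finite_box]) (simp add: a0v)
  also have "(\<Sum>a\<in>{a. a \<le> v} - {a0}. f a * g (v - a)) = 0"
  proof (rule sum.neutral, rule ballI)
    fix a assume a': "a \<in> {a. a \<le> v} - {a0}"
    hence a: "a \<in> {a. a \<le> v}" "a \<noteq> a0" by auto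
    show "f a * g (v - a) = 0"
    proof (rule ccontr)
      assume "f a * g (v - a) \<noteq> 0"
      hence "a \<in> psupp f" "v - a \<in> psupp g" by (auto simp: psupp_def)
      hence "emb a \<in> newton (psupp f)" "emb (v - a) \<in> newton (psupp g)" by (auto intro: emb_in_newton)
      moreover have "emb a0 \<in> newton (psupp f)" "emb b0 \<in> newton (psupp g)" using ab by (auto intro: emb_in_newton)
      moreover have "emb a + emb (v - a) = emb v" using le_diff_add[of a v] a by (simp add: emb_add[symmetric])
      moreover have "emb a0 + emb b0 = emb v" using ab by (simp add: emb_add)
      ultimately have "emb a = emb a0" using vert_sum_unique[OF ext] by blast
      thus False using a emb_inj by blast
    qed
  qed
  finally show ?thesis using ab(2,3) b0 by (simp add: psupp_def)
qed

definition pdom :: "('n::finite, 'k::field) mps \<Rightarrow> ('n, 'k) mps \<Rightarrow> bool" where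
  "pdom h G \<longleftrightarrow> emb ` psupp h \<subseteq> newton (psupp G)"

lemma psupp_empty_iff: "psupp f = {} \<longleftrightarrow> f = ps_zero"
  by (auto simp: psupp_def ps_zero_def fun_eq_iff)

lemma ps_mult_nonzero:
  assumes "f \<noteq> ps_zero" "g \<noteq> ps_zero" shows "ps_mult f g \<noteq> ps_zero"
proof -
  have "psupp f \<noteq> {}" "psupp g \<noteq> {}" using assms psupp_empty_iff by auto
  hence "psupp f + psupp g \<noteq> {}" by (auto simp: set_plus_def)
  hence "vert (psupp f + psupp g) \<noteq> {}" by (rule vert_nonempty)
  then obtain v where "v \<in> vert (psupp f + psupp g)" by blast
  hence "ps_mult f g v \<noteq> 0" by (rule vert_coeff)
  thus ?thesis by (auto simp: ps_zero_def)
qed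

lemma vert_sub_supp_mult: "vert (psupp f + psupp g) \<subseteq> psupp (ps_mult f g)"
  using vert_coeff by (auto simp: psupp_def)

lemma newton_mult_eq: "newton (psupp (ps_mult f g)) = newton (psupp f + psupp g)"
proof (rule subset_antisym)
  show "newton (psupp (ps_mult f g)) \<subseteq> newton (psupp f + psupp g)"
    by (rule newton_mono[OF supp_mult])
  have "newton (psupp f + psupp g) = newton (vert (psupp f + psupp g))" by (simp add: newton_vert)
  also have "\<dots> \<subseteq> newton (psupp (ps_mult f g))" by (rule newton_mono[OF vert_sub_supp_mult])
  finally show "newton (psupp f + psupp g) \<subseteq> newton (psupp (ps_mult f g))" .
qed

lemma vert_mult_eq: "vert (psupp (ps_mult f g)) = vert (psupp f + psupp g)"
  by (rule vert_cong[OF newton_mult_eq])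

lemma pd_self: "pdom G G"
  unfolding pdom_def by (auto intro: emb_in_newton)

lemma pd_mult:
  assumes "pdom h G" "pdom h' G'" shows "pdom (ps_mult h h') (ps_mult G G')"
  unfolding pdom_def
proof (rule image_subsetI)
  fix v assume "v \<in> psupp (ps_mult h h')"
  hence "v \<in> psupp h + psupp h'" using supp_mult by blast
  then obtain a b where ab: "v = a + b" "a \<in> psupp h" "b \<in> psupp h'" by (auto elim!: set_plus_elim)
  have "emb a \<in> newton (psupp G)" "emb b \<in> newton (psupp G')" using assms ab unfolding pdom_def by auto
  hence "emb a + emb b \<in> newton (psupp G + psupp G')" by (rule newton_plus)
  thus "emb v \<in> newton (psupp (ps_mult G G'))" using ab by (simp add: emb_add newton_mult_eq)
qed

lemma pd_mono_supp: "psupp h \<subseteq> psupp h1 \<union> psupp h2 \<Longrightarrow> pdom h1 G \<Longrightarrow> pdom h2 G \<Longrightarrow> pdom h G"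
  unfolding pdom_def by blast

lemma supp_add: "psupp (ps_add f g) \<subseteq> psupp f \<union> psupp g"
  by (auto simp: psupp_def ps_add_def)

lemma pd_add: "pdom h G \<Longrightarrow> pdom h' G \<Longrightarrow> pdom (ps_add h h') G"
  by (rule pd_mono_supp[OF supp_add])

lemma pd_neg: "pdom h G \<Longrightarrow> pdom (\<lambda>e. - h e) G"
  unfolding pdom_def psupp_def by simp

lemma pd_smult: "pdom h G \<Longrightarrow> pdom (\<lambda>e. c * h e) G"
  unfolding pdom_def psupp_def by auto

lemma pd_diff: "pdom h G \<Longrightarrow> pdom h' G \<Longrightarrow> pdom (\<lambda>e. h e - h' e) G"
  by (rule pd_mono_supp[of _ h h']) (auto simp: psupp_def)

lemma pd_const: "pdom (ps_const c) (ps_const 1)"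
  unfolding pdom_def psupp_def ps_const_def by (auto intro: emb_in_newton)

lemma pd_zero: "pdom ps_zero G"
  unfolding pdom_def psupp_def ps_zero_def by auto

lemma vertex_decomp:
  assumes d: "pdom h G" "pdom h' G'"
    and v: "v \<in> vert (psupp (ps_mult G G'))"
    and nz: "ps_mult h h' v \<noteq> 0"
  obtains a b where "v = a + b" "h a \<noteq> 0" "h' b \<noteq> 0"
    "a \<in> vert (psupp G)" "b \<in> vert (psupp G')"
proof -
  have "v \<in> vert (psupp G + psupp G')" using v by (simp only: vert_mult_eq)
  hence ext: "emb v extreme_point_of newton (psupp G + psupp G')" by (simp add: vert_def)
  obtain a where a: "a \<le> v" "h a \<noteq> 0" "h' (v - a) \<noteq> 0" using nz by (rule coeff_nonzero)
  have va: "v = a + (v - a)" using le_diff_add[OF a(1)] by simp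
  have x: "emb a \<in> newton (psupp G)" using d(1) a(2) unfolding pdom_def psupp_def by auto
  have y: "emb (v - a) \<in> newton (psupp G')" using d(2) a(3) unfolding pdom_def psupp_def by auto
  have e: "emb a + emb (v - a) = emb v" using va by (metis emb_add)
  have "emb a extreme_point_of newton (psupp G)" by (rule vert_sum_extreme1[OF ext x y e])
  moreover have "emb (v - a) extreme_point_of newton (psupp G')" by (rule vert_sum_extreme2[OF ext x y e])
  ultimately show ?thesis using that[OF va a(2) a(3)] by (simp add: vert_def)
qed

datatype ('n, 'k) ps = PS (cf: "('n \<Rightarrow> nat) \<Rightarrow> 'k")

instantiation ps :: (finite, field) comm_ring_1
begin
definition zero_ps_def: "0 = PS ps_zero"
definition one_ps_def: "1 = PS (ps_const 1)"
definition plus_ps_def: "a + b = PS (ps_add (cf a) (cf b))"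
definition uminus_ps_def: "- a = PS (\<lambda>e. - cf a e)"
definition minus_ps_def: "a - b = PS (\<lambda>e. cf a e - cf b e)"
definition times_ps_def: "a * b = PS (ps_mult (cf a) (cf b))"
instance
proof
  fix a b c :: "('a, 'b) ps"
  show "a + b + c = a + (b + c)" by (simp add: plus_ps_def ps_add_def add.assoc)
  show "a + b = b + a" by (simp add: plus_ps_def ps_add_def add.commute)
  show "0 + a = a" by (cases a) (simp add: plus_ps_def zero_ps_def ps_add_def ps_zero_def)
  show "- a + a = 0" by (simp add: plus_ps_def uminus_ps_def zero_ps_def ps_add_def ps_zero_def)
  show "a - b = a + - b" by (simp add: plus_ps_def uminus_ps_def minus_ps_def ps_add_def)
  show "a * b * c = a * (b * c)" by (simp add: times_ps_def ps_mult_assoc)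
  show "a * b = b * a" by (simp add: times_ps_def ps_mult_comm)
  show "1 * a = a" by (cases a) (simp add: times_ps_def one_ps_def ps_mult_const)
  show "(a + b) * c = a * c + b * c" by (simp add: times_ps_def plus_ps_def ps_mult_add_left)
  show "(0 :: ('a, 'b) ps) \<noteq> 1"
    unfolding zero_ps_def one_ps_def by (auto simp: ps_zero_def ps_const_def fun_eq_iff intro!: exI[of _ "\<lambda>_. 0"])
qed
end

instance ps :: (finite, field) idom
proof
  fix a b :: "('a, 'b) ps"
  assume "a \<noteq> 0" "b \<noteq> 0"
  hence "cf a \<noteq> ps_zero" "cf b \<noteq> ps_zero" by (cases a, cases b, auto simp: zero_ps_def)+
  hence "ps_mult (cf a) (cf b) \<noteq> ps_zero" by (rule ps_mult_nonzero)
  thus "a * b \<noteq> 0" by (simp add: times_ps_def zero_ps_def)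
qed

lemma PS_add: "PS (ps_add f g) = PS f + PS g" by (simp add: plus_ps_def)
lemma PS_mult: "PS (ps_mult f g) = PS f * PS g" by (simp add: times_ps_def)
lemma PS_zero_iff: "PS f = 0 \<longleftrightarrow> f = ps_zero" by (simp add: zero_ps_def)
lemma PS_one: "PS (ps_const 1) = 1" by (simp add: one_ps_def)
lemma PS_neg: "PS (\<lambda>e. - f e) = - PS f" by (simp add: uminus_ps_def)
lemma PS_diff: "PS (\<lambda>e. f e - g e) = PS f - PS g" by (simp add: minus_ps_def)
lemma PS_const_mult: "PS (ps_const c) * PS f = PS (\<lambda>e. c * f e)" by (simp add: times_ps_def ps_mult_const)
lemma PS_const_add: "PS (ps_const c) + PS (ps_const d) = PS (ps_const (c + d))"
  by (simp add: plus_ps_def ps_add_def ps_const_def fun_eq_iff)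
lemma PS_const_times: "PS (ps_const c) * PS (ps_const d) = PS (ps_const (c * d))"
  unfolding PS_const_mult by (simp add: ps_const_def fun_eq_iff)

definition valid :: "('n::finite, 'k::field) mps \<times> ('n, 'k) mps \<Rightarrow> bool" where
  "valid p \<longleftrightarrow> snd p \<noteq> ps_zero"

definition FF :: "('n::finite, 'k::field) mps \<times> ('n, 'k) mps \<Rightarrow> ('n, 'k) ps fract" where
  "FF p = Fract (PS (fst p)) (PS (snd p))"

lemma frac_rel_iff: "frac_rel p q \<longleftrightarrow> valid p \<and> valid q \<and> FF p = FF q"
proof -
  have "valid p \<Longrightarrow> valid q \<Longrightarrow> FF p = FF q \<longleftrightarrow> ps_mult (fst p) (snd q) = ps_mult (fst q) (snd p)"
    unfolding valid_def FF_def
    by (subst eq_fract) (auto simp: PS_zero_iff PS_mult[symmetric])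
  thus ?thesis unfolding frac_rel_def valid_def by auto
qed

lemma frac_class_eq: "frac_class p = {q. valid p \<and> valid q \<and> FF q = FF p}"
  unfolding frac_class_def frac_rel_iff by auto

lemma self_in_class: "valid p \<Longrightarrow> p \<in> frac_class p"
  by (simp add: frac_class_eq)

lemma in_class: "q \<in> frac_class p \<longleftrightarrow> valid p \<and> valid q \<and> FF q = FF p"
  by (simp add: frac_class_eq)

lemma class_eq_iff: "valid p \<Longrightarrow> valid q \<Longrightarrow> frac_class p = frac_class q \<longleftrightarrow> FF p = FF q"
  unfolding frac_class_eq by auto

lemma rep_class: assumes "valid p" shows "valid (frac_rep (frac_class p))" "FF (frac_rep (frac_class p)) = FF p"
proof -
  have "frac_rep (frac_class p) \<in> frac_class p"
    unfolding frac_rep_def by (rule someI[of _ p]) (rule self_in_class[OF assms])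
  thus "valid (frac_rep (frac_class p))" "FF (frac_rep (frac_class p)) = FF p" by (auto simp: in_class)
qed

definition phi :: "(('n::finite, 'k::field) mps \<times> ('n, 'k) mps) set \<Rightarrow> ('n, 'k) ps fract" where
  "phi Q = FF (frac_rep Q)"

lemma phi_class: "valid p \<Longrightarrow> phi (frac_class p) = FF p"
  by (simp add: phi_def rep_class)

lemma laurent_iff: "Q \<in> laurent_set \<longleftrightarrow> (\<exists>p. valid p \<and> Q = frac_class p)"
  unfolding laurent_set_def valid_def by auto

lemma phi_inj:
  assumes "Q \<in> laurent_set" "R \<in> laurent_set" "phi Q = phi R" shows "Q = R"
proof -
  obtain p q where "valid p" "Q = frac_class p" "valid q" "R = frac_class q" using assms(1,2) laurent_iff by metis
  thus ?thesis using assms(3) by (simp add: phi_class class_eq_iff)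
qed

definition addp where
  "addp p q = (ps_add (ps_mult (fst p) (snd q)) (ps_mult (fst q) (snd p)), ps_mult (snd p) (snd q))"
definition multp where
  "multp p q = (ps_mult (fst p) (fst q), ps_mult (snd p) (snd q))"

lemma valid_addp: "valid p \<Longrightarrow> valid q \<Longrightarrow> valid (addp p q)"
  by (simp add: valid_def addp_def ps_mult_nonzero)
lemma valid_multp: "valid p \<Longrightarrow> valid q \<Longrightarrow> valid (multp p q)"
  by (simp add: valid_def multp_def ps_mult_nonzero)

lemma FF_addp: "valid p \<Longrightarrow> valid q \<Longrightarrow> FF (addp p q) = FF p + FF q"
  by (simp add: FF_def addp_def valid_def PS_add PS_mult PS_zero_iff add_fract)
lemma FF_multp: "FF (multp p q) = FF p * FF q"
  by (simp add: FF_def multp_def PS_mult mult_fract)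

lemma frac_add_class:
  assumes "valid p" "valid q" shows "frac_add (frac_class p) (frac_class q) = frac_class (addp p q)"
proof -
  let ?p' = "frac_rep (frac_class p)" and ?q' = "frac_rep (frac_class q)"
  have "frac_add (frac_class p) (frac_class q) = frac_class (addp ?p' ?q')"
    unfolding frac_add_def addp_def by simp
  also have "\<dots> = frac_class (addp p q)"
    using rep_class[OF assms(1)] rep_class[OF assms(2)] assms
    by (simp add: class_eq_iff valid_addp FF_addp)
  finally show ?thesis .
qed

lemma frac_mult_class:
  assumes "valid p" "valid q" shows "frac_mult (frac_class p) (frac_class q) = frac_class (multp p q)"
proof -
  let ?p' = "frac_rep (frac_class p)" and ?q' = "frac_rep (frac_class q)"
  have "frac_mult (frac_class p) (frac_class q) = frac_class (multp ?p' ?q')"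
    unfolding frac_mult_def multp_def by simp
  also have "\<dots> = frac_class (multp p q)"
    using rep_class[OF assms(1)] rep_class[OF assms(2)] assms
    by (simp add: class_eq_iff valid_multp FF_multp)
  finally show ?thesis .
qed

lemma trop_eq: "trop f = vert (psupp f)" by (simp add: trop_def psupp_def)

lemma Kcirc_set_iff:
  "Q \<in> Kcirc_set \<longleftrightarrow> (\<exists>p. valid p \<and> pdom (fst p) (snd p) \<and> Q = frac_class p)"
proof
  assume "Q \<in> Kcirc_set"
  then obtain p where Q: "Q \<in> laurent_set" and p: "p \<in> Q"
    and c: "VB_frac_le (trop (fst p), trop (snd p)) (VB_one, VB_one)"
    unfolding Kcirc_set_def by blast
  obtain p0 where p0: "valid p0" "Q = frac_class p0" using Q laurent_iff by metis
  have vp: "valid p" "FF p = FF p0" using p p0 by (auto simp: in_class)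
  have "Q = frac_class p" using p0 vp by (simp add: class_eq_iff)
  moreover have "pdom (fst p) (snd p)" using c by (simp add: trop_eq cond_iff_newton pdom_def)
  ultimately show "\<exists>p. valid p \<and> pdom (fst p) (snd p) \<and> Q = frac_class p" using vp by blast
next
  assume "\<exists>p. valid p \<and> pdom (fst p) (snd p) \<and> Q = frac_class p"
  then obtain p where p: "valid p" "pdom (fst p) (snd p)" "Q = frac_class p" by blast
  have "Q \<in> laurent_set" using p laurent_iff by blast
  moreover have "p \<in> Q" using p self_in_class by blast
  moreover have "VB_frac_le (trop (fst p), trop (snd p)) (VB_one, VB_one)"
    using p by (simp add: trop_eq cond_iff_newton pdom_def)
  ultimately show "Q \<in> Kcirc_set" unfolding Kcirc_set_def by blast
qed

lemma Kcirc_in_laurent: "Q \<in> Kcirc_set \<Longrightarrow> Q \<in> laurent_set"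
  unfolding Kcirc_set_def by blast

lemma class_in_Kcirc: "valid p \<Longrightarrow> pdom (fst p) (snd p) \<Longrightarrow> frac_class p \<in> Kcirc_set"
  using Kcirc_set_iff by blast

lemma Kcirc_simps [simp]:
  "carrier Kcirc = Kcirc_set" "add Kcirc = frac_add" "mult Kcirc = frac_mult"
  "one Kcirc = frac_of_const 1" "zero Kcirc = frac_of_const 0"
  by (simp_all add: Kcirc_def)

lemma valid_const: "valid (ps_const c, ps_const 1)"
  by (auto simp: valid_def ps_const_def ps_zero_def fun_eq_iff intro!: exI[of _ "\<lambda>_. 0"])

lemma FF_const: "FF (ps_const c, ps_const 1) = Fract (PS (ps_const c)) 1"
  by (simp add: FF_def PS_one)

lemma const_in_Kcirc: "frac_of_const c \<in> Kcirc_set"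
  unfolding frac_of_const_def by (rule class_in_Kcirc[OF valid_const]) (simp add: pd_const)

lemma phi_const: "phi (frac_of_const c) = Fract (PS (ps_const c)) 1"
  unfolding frac_of_const_def by (simp add: phi_class valid_const FF_const)

lemma PS_const0: "PS (ps_const 0) = 0"
  by (simp add: zero_ps_def ps_const_def ps_zero_def fun_eq_iff)

lemma phi_zero: "phi (frac_of_const 0) = 0"
  by (simp add: phi_const PS_const0 Zero_fract_def eq_fract)

lemma phi_one: "phi (frac_of_const 1) = 1"
  by (simp add: phi_const PS_one One_fract_def)

lemma laurent_add:
  assumes "Q \<in> laurent_set" "R \<in> laurent_set"
  shows "frac_add Q R \<in> laurent_set" "phi (frac_add Q R) = phi Q + phi R"
proof -
  obtain p q where p: "valid p" "Q = frac_class p" and q: "valid q" "R = frac_class q"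
    using assms laurent_iff by metis
  have e: "frac_add Q R = frac_class (addp p q)" using p q by (simp add: frac_add_class)
  show "frac_add Q R \<in> laurent_set" using e valid_addp[OF p(1) q(1)] laurent_iff by blast
  show "phi (frac_add Q R) = phi Q + phi R"
    using e p q by (simp add: phi_class valid_addp FF_addp)
qed

lemma laurent_mult:
  assumes "Q \<in> laurent_set" "R \<in> laurent_set"
  shows "frac_mult Q R \<in> laurent_set" "phi (frac_mult Q R) = phi Q * phi R"
proof -
  obtain p q where p: "valid p" "Q = frac_class p" and q: "valid q" "R = frac_class q"
    using assms laurent_iff by metis
  have e: "frac_mult Q R = frac_class (multp p q)" using p q by (simp add: frac_mult_class)
  show "frac_mult Q R \<in> laurent_set" using e valid_multp[OF p(1) q(1)] laurent_iff by blast
  show "phi (frac_mult Q R) = phi Q * phi R"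
    using e p q by (simp add: phi_class valid_multp FF_multp)
qed

lemma Kcirc_add_closed:
  assumes "Q \<in> Kcirc_set" "R \<in> Kcirc_set" shows "frac_add Q R \<in> Kcirc_set"
proof -
  obtain p where p: "valid p" "pdom (fst p) (snd p)" "Q = frac_class p" using assms(1) Kcirc_set_iff by blast
  obtain q where q: "valid q" "pdom (fst q) (snd q)" "R = frac_class q" using assms(2) Kcirc_set_iff by blast
  have "pdom (fst (addp p q)) (snd (addp p q))"
    unfolding addp_def fst_conv snd_conv
  proof (rule pd_add)
    show "pdom (ps_mult (fst p) (snd q)) (ps_mult (snd p) (snd q))" by (rule pd_mult[OF p(2) pd_self])
    have "pdom (ps_mult (fst q) (snd p)) (ps_mult (snd q) (snd p))" by (rule pd_mult[OF q(2) pd_self])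
    thus "pdom (ps_mult (fst q) (snd p)) (ps_mult (snd p) (snd q))" by (simp add: ps_mult_comm)
  qed
  thus ?thesis using p q by (simp add: frac_add_class class_in_Kcirc valid_addp)
qed

lemma Kcirc_mult_closed:
  assumes "Q \<in> Kcirc_set" "R \<in> Kcirc_set" shows "frac_mult Q R \<in> Kcirc_set"
proof -
  obtain p where p: "valid p" "pdom (fst p) (snd p)" "Q = frac_class p" using assms(1) Kcirc_set_iff by blast
  obtain q where q: "valid q" "pdom (fst q) (snd q)" "R = frac_class q" using assms(2) Kcirc_set_iff by blast
  have "pdom (fst (multp p q)) (snd (multp p q))"
    unfolding multp_def fst_conv snd_conv by (rule pd_mult[OF p(2) q(2)])
  thus ?thesis using p q by (simp add: frac_mult_class class_in_Kcirc valid_multp)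
qed

lemma Kcirc_neg:
  assumes "Q \<in> Kcirc_set" shows "\<exists>R\<in>Kcirc_set. phi R = - phi Q"
proof -
  obtain p where p: "valid p" "pdom (fst p) (snd p)" "Q = frac_class p" using assms(1) Kcirc_set_iff by blast
  let ?n = "(\<lambda>e. - fst p e, snd p)"
  have v: "valid ?n" using p by (simp add: valid_def)
  have "frac_class ?n \<in> Kcirc_set" using p v by (intro class_in_Kcirc) (simp_all add: pd_neg)
  moreover have "phi (frac_class ?n) = - phi Q"
    using p v by (simp add: phi_class FF_def PS_neg valid_def PS_zero_iff)
  ultimately show ?thesis by blast
qed

lemma cring_Kcirc: "cring (Kcirc :: (('n::finite, 'k::field) mps \<times> ('n, 'k) mps) set ring)"
proof (rule cringI)
  note L = Kcirc_in_laurent laurent_add laurent_mult const_in_Kcirc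
  show "abelian_group (Kcirc :: (('n, 'k) mps \<times> ('n, 'k) mps) set ring)"
  proof (rule abelian_groupI, simp_all add: Kcirc_add_closed const_in_Kcirc)
    fix x y z :: "(('n, 'k) mps \<times> ('n, 'k) mps) set"
    assume x: "x \<in> Kcirc_set" and y: "y \<in> Kcirc_set" and z: "z \<in> Kcirc_set"
    show "frac_add (frac_add x y) z = frac_add x (frac_add y z)"
      by (rule phi_inj) (use x y z in \<open>simp_all add: L add.assoc\<close>)
  next
    fix x y :: "(('n, 'k) mps \<times> ('n, 'k) mps) set"
    assume x: "x \<in> Kcirc_set" and y: "y \<in> Kcirc_set"
    show "frac_add x y = frac_add y x"
      by (rule phi_inj) (use x y in \<open>simp_all add: L add.commute\<close>)
  next
    fix x :: "(('n, 'k) mps \<times> ('n, 'k) mps) set"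
    assume x: "x \<in> Kcirc_set"
    show "frac_add (frac_of_const 0) x = x"
      by (rule phi_inj) (use x in \<open>simp_all add: L phi_zero\<close>)
  next
    fix x :: "(('n, 'k) mps \<times> ('n, 'k) mps) set"
    assume x: "x \<in> Kcirc_set"
    obtain y where y: "y \<in> Kcirc_set" "phi y = - phi x" using Kcirc_neg[OF x] by blast
    have "frac_add y x = frac_of_const 0"
      by (rule phi_inj) (use x y in \<open>simp_all add: L phi_zero\<close>)
    thus "\<exists>y\<in>Kcirc_set. frac_add y x = frac_of_const 0" using y by blast
  qed
  show "comm_monoid (Kcirc :: (('n, 'k) mps \<times> ('n, 'k) mps) set ring)"
  proof (rule comm_monoidI, simp_all add: Kcirc_mult_closed const_in_Kcirc)
    fix x y z :: "(('n, 'k) mps \<times> ('n, 'k) mps) set"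
    assume x: "x \<in> Kcirc_set" and y: "y \<in> Kcirc_set" and z: "z \<in> Kcirc_set"
    show "frac_mult (frac_mult x y) z = frac_mult x (frac_mult y z)"
      by (rule phi_inj) (use x y z in \<open>simp_all add: L mult.assoc\<close>)
  next
    fix x :: "(('n, 'k) mps \<times> ('n, 'k) mps) set"
    assume x: "x \<in> Kcirc_set"
    show "frac_mult (frac_of_const 1) x = x"
      by (rule phi_inj) (use x in \<open>simp_all add: L phi_one\<close>)
  next
    fix x y :: "(('n, 'k) mps \<times> ('n, 'k) mps) set"
    assume x: "x \<in> Kcirc_set" and y: "y \<in> Kcirc_set"
    show "frac_mult x y = frac_mult y x"
      by (rule phi_inj) (use x y in \<open>simp_all add: L mult.commute\<close>)
  qed
  fix x y z :: "(('n, 'k) mps \<times> ('n, 'k) mps) set"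
  assume x: "x \<in> carrier Kcirc" and y: "y \<in> carrier Kcirc" and z: "z \<in> carrier Kcirc"
  show "(x \<oplus>\<^bsub>Kcirc\<^esub> y) \<otimes>\<^bsub>Kcirc\<^esub> z = x \<otimes>\<^bsub>Kcirc\<^esub> z \<oplus>\<^bsub>Kcirc\<^esub> y \<otimes>\<^bsub>Kcirc\<^esub> z"
    by (simp, rule phi_inj) (use x y z in \<open>simp_all add: L distrib_right\<close>)
qed

lemma ring_type_ring: "ring (type_ring :: 'k::field ring)"
  unfolding type_ring_def
  by (rule ringI, rule abelian_groupI, auto intro!: monoidI simp: algebra_simps)
     (metis add.commute add.right_inverse)

lemma type_ring_simps [simp]:
  "carrier type_ring = UNIV" "mult type_ring = (*)" "add type_ring = (+)"
  "one type_ring = 1" "zero type_ring = 0"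
  by (simp_all add: type_ring_def)

lemma foc_add: "frac_of_const (c + d) = frac_add (frac_of_const c) (frac_of_const d)"
  by (rule phi_inj) (simp_all add: Kcirc_in_laurent const_in_Kcirc laurent_add phi_const PS_const_add)

lemma foc_mult: "frac_of_const (c * d) = frac_mult (frac_of_const c) (frac_of_const d)"
  by (rule phi_inj) (simp_all add: Kcirc_in_laurent const_in_Kcirc laurent_mult phi_const PS_const_times)

lemma foc_hom: "frac_of_const \<in> ring_hom (type_ring :: 'k::field ring) (Kcirc :: (('n::finite, 'k) mps \<times> ('n, 'k) mps) set ring)"
  by (rule ring_hom_memI) (simp_all add: const_in_Kcirc foc_add foc_mult)

fun gp :: "('n::finite, 'k::field) mps \<Rightarrow> nat \<Rightarrow> ('n, 'k) mps" where
  "gp g 0 = ps_const 1"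
| "gp g (Suc n) = ps_mult (gp g n) g"

definition nsc :: "nat \<Rightarrow> ('n \<Rightarrow> nat) \<Rightarrow> ('n \<Rightarrow> nat)" where
  "nsc n a = (\<lambda>i. n * a i)"

lemma ps_const1_nz: "(ps_const 1 :: ('n::finite, 'k::field) mps) \<noteq> ps_zero"
proof -
  have "(ps_const 1 :: ('n, 'k) mps) (\<lambda>i. 0) = 1" by (simp add: ps_const_def)
  thus ?thesis by (auto simp: ps_zero_def)
qed

lemma gp_nonzero: "g \<noteq> ps_zero \<Longrightarrow> gp g n \<noteq> ps_zero"
  by (induction n) (simp_all add: ps_const1_nz ps_mult_nonzero)

lemma emb_nsc: "emb (nsc n a) = real n *\<^sub>R emb a"
  by (simp add: emb_def nsc_def vec_eq_iff)

lemma nsc_Suc: "nsc (Suc n) a = nsc n a + a"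
  by (simp add: nsc_def plus_fun_def fun_eq_iff)

lemma nsc_0: "nsc 0 a = 0"
  by (simp add: nsc_def zero_fun_def)

lemma nsc_inj: "n > 0 \<Longrightarrow> nsc n a = nsc n b \<Longrightarrow> a = b"
  by (simp add: nsc_def fun_eq_iff)

lemma psupp_const1: "psupp (ps_const 1) = {0}"
  by (auto simp: psupp_def ps_const_def zero_fun_def)

lemma gp_scale:
  assumes b: "b \<in> psupp g" shows "emb (nsc n b) \<in> newton (psupp (gp g n))"
proof (induction n)
  case 0
  have "nsc 0 b \<in> psupp (gp g 0)" by (simp add: nsc_0 psupp_const1)
  thus ?case by (rule emb_in_newton)
next
  case (Suc n)
  have "emb (nsc n b) + emb b \<in> newton (psupp (gp g n) + psupp g)"
    by (rule newton_plus[OF Suc emb_in_newton[OF b]])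
  thus ?case unfolding nsc_Suc emb_add gp.simps newton_mult_eq .
qed

lemma scale_eq:
  assumes v: "v \<in> vert (psupp (gp g (Suc n)))" and n: "n \<ge> 1"
    and b: "b \<in> psupp g" and y: "y \<in> psupp g" and e: "v = nsc n b + y"
  shows "b = y"
proof (rule ccontr)
  assume bne: "b \<noteq> y"
  define P1 where "P1 = emb (nsc (Suc n) b)"
  define P2 where "P2 = emb (nsc (Suc n) y)"
  have P1: "P1 \<in> newton (psupp (gp g (Suc n)))" unfolding P1_def by (rule gp_scale[OF b])
  have P2: "P2 \<in> newton (psupp (gp g (Suc n)))" unfolding P2_def by (rule gp_scale[OF y])
  have ne: "P1 \<noteq> P2"
  proof
    assume "P1 = P2"
    hence "nsc (Suc n) b = nsc (Suc n) y" unfolding P1_def P2_def by (rule emb_inj)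
    thus False using bne nsc_inj by blast
  qed
  define u :: real where "u = 1 / real (Suc n)"
  have u: "0 < u" "u < 1" using n by (auto simp: u_def)
  have "emb v = (1 - u) *\<^sub>R P1 + u *\<^sub>R P2"
  proof -
    have "emb v = real n *\<^sub>R emb b + emb y" by (simp add: e emb_add emb_nsc)
    moreover have "(1 - u) *\<^sub>R P1 = real n *\<^sub>R emb b"
    proof -
      have "(1 - u) * real (Suc n) = real n" by (simp add: u_def field_simps)
      thus ?thesis unfolding P1_def emb_nsc scaleR_scaleR by simp
    qed
    moreover have "u *\<^sub>R P2 = emb y"
      unfolding P2_def emb_nsc u_def by simp
    ultimately show ?thesis by simp
  qed
  hence "emb v \<in> open_segment P1 P2" using ne u unfolding in_segment by blast
  moreover have "emb v extreme_point_of newton (psupp (gp g (Suc n)))" using v by (simp add: vert_def)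
  ultimately show False using P1 P2 unfolding extreme_point_of_def by blast
qed

lemma vert_const1: "vert (psupp (ps_const 1)) \<subseteq> {0}"
  using vert_sub[of "psupp (ps_const 1)"] by (simp add: psupp_const1)

lemma gp_vert:
  assumes W: "vert (psupp g) \<noteq> {}"
  shows "v \<in> vert (psupp (gp g n)) \<Longrightarrow> \<exists>a\<in>vert (psupp g). v = nsc n a"
proof (induction n arbitrary: v)
  case 0
  hence "v = 0" using vert_const1 by auto
  thus ?case using W by (auto simp: nsc_0)
next
  case (Suc n)
  have v: "v \<in> vert (psupp (ps_mult (gp g n) g))" using Suc.prems by simp
  have "ps_mult (gp g n) g v \<noteq> 0" using v vert_sub[of "psupp (ps_mult (gp g n) g)"] by (auto simp: psupp_def)
  then obtain x y where xy: "v = x + y" "x \<in> vert (psupp (gp g n))" "y \<in> vert (psupp g)"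
    using vertex_decomp[OF pd_self pd_self v] by metis
  obtain b where b: "b \<in> vert (psupp g)" "x = nsc n b" using Suc.IH[OF xy(2)] by blast
  show ?case
  proof (cases "n = 0")
    case True
    hence "v = nsc (Suc n) y" using xy b by (simp add: nsc_def plus_fun_def fun_eq_iff)
    thus ?thesis using xy(3) by blast
  next
    case False
    have "b = y"
      by (rule scale_eq[OF Suc.prems _ _ _ ]) (use False b xy vert_sub in auto)
    hence "v = nsc (Suc n) y" using xy b by (simp add: nsc_Suc add.commute)
    thus ?thesis using xy(3) by blast
  qed
qed

type_synonym ('n, 'k) kel = "(('n, 'k) mps \<times> ('n, 'k) mps) set"

lemma Fract_self: "x \<noteq> 0 \<Longrightarrow> Fract x x = 1"
  by (simp add: One_fract_def eq_fract)

lemma vert_kill_sum: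
  assumes d: "pdom H G" "pdom h' G'" and kill: "\<forall>a\<in>vert (psupp G). H a = 0"
    and w: "w \<in> vert (psupp (ps_mult G' G))"
  shows "ps_add (ps_mult G' G) (ps_mult h' H) w \<noteq> 0"
proof -
  have "ps_mult h' H w = 0"
  proof (rule ccontr)
    assume "ps_mult h' H w \<noteq> 0"
    then obtain a b where "H b \<noteq> 0" "b \<in> vert (psupp G)"
      using vertex_decomp[OF d(2) d(1) w] by metis
    thus False using kill by blast
  qed
  moreover have "ps_mult G' G w \<noteq> 0" using w vert_sub[of "psupp (ps_mult G' G)"] by (auto simp: psupp_def)
  ultimately show ?thesis by (simp add: ps_add_def)
qed

lemma unit_aux:
  assumes v: "G \<noteq> ps_zero" "G' \<noteq> ps_zero" and d: "pdom H G" "pdom h' G'"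
    and kill: "\<forall>a\<in>vert (psupp G). H a = 0"
  defines "N \<equiv> ps_add (ps_mult G' G) (ps_mult h' H)" and "D \<equiv> ps_mult G' G"
  shows "N \<noteq> ps_zero" "pdom D N"
proof -
  have D0: "D \<noteq> ps_zero" using v by (simp add: D_def ps_mult_nonzero)
  have sub: "vert (psupp D) \<subseteq> psupp N"
    using vert_kill_sum[OF d kill] by (auto simp: psupp_def N_def D_def)
  have "psupp D \<noteq> {}" using D0 psupp_empty_iff by blast
  hence "vert (psupp D) \<noteq> {}" by (rule vert_nonempty)
  thus "N \<noteq> ps_zero" using sub psupp_empty_iff by blast
  have "emb ` psupp D \<subseteq> newton (psupp D)" by (auto intro: emb_in_newton)
  also have "\<dots> = newton (vert (psupp D))" by (simp add: newton_vert)
  also have "\<dots> \<subseteq> newton (psupp N)" by (rule newton_mono[OF sub])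
  finally show "pdom D N" by (simp add: pdom_def)
qed

lemma small_in_M:
  fixes M :: "('n::finite, 'k::field) kel set"
  assumes max: "maximalideal M Kcirc"
    and v: "G \<noteq> ps_zero" and d: "pdom H G" and kill: "\<forall>a\<in>vert (psupp G). H a = 0"
  shows "frac_class (H, G) \<in> M"
proof (rule ccontr)
  interpret R: cring "Kcirc :: ('n, 'k) kel ring" by (rule cring_Kcirc)
  interpret maximalideal M "Kcirc :: ('n, 'k) kel ring" by (rule max)
  assume nM: "frac_class (H, G) \<notin> M"
  let ?r = "frac_class (H, G)"
  have vr: "valid (H, G)" using v by (simp add: valid_def)
  have r: "?r \<in> carrier Kcirc" using class_in_Kcirc[OF vr] d by simp
  have F: "field (Kcirc Quot M)" by (rule quotient_is_field[OF cring_Kcirc])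
  have Msub: "M \<subseteq> carrier Kcirc" by (rule a_subset)
  have rq: "M +>\<^bsub>Kcirc\<^esub> ?r \<in> carrier (Kcirc Quot M)"
    unfolding FactRing_def by (simp add: R.a_rcosetsI[OF Msub r])
  have rne: "M +>\<^bsub>Kcirc\<^esub> ?r \<noteq> \<zero>\<^bsub>Kcirc Quot M\<^esub>"
  proof
    assume "M +>\<^bsub>Kcirc\<^esub> ?r = \<zero>\<^bsub>Kcirc Quot M\<^esub>"
    hence e: "M +>\<^bsub>Kcirc\<^esub> ?r = M" by (simp add: FactRing_def)
    have "\<zero>\<^bsub>Kcirc\<^esub> \<oplus>\<^bsub>Kcirc\<^esub> ?r \<in> M +>\<^bsub>Kcirc\<^esub> ?r"
      by (rule R.a_rcosI[OF additive_subgroup.zero_closed[OF is_additive_subgroup] Msub r])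
    moreover have "\<zero>\<^bsub>Kcirc\<^esub> \<oplus>\<^bsub>Kcirc\<^esub> ?r = ?r" by (rule R.l_zero[OF r])
    ultimately have "?r \<in> M +>\<^bsub>Kcirc\<^esub> ?r" by (simp only:)
    hence "?r \<in> M" by (simp only: e)
    thus False using nM by simp
  qed
  have "M +>\<^bsub>Kcirc\<^esub> ?r \<in> Units (Kcirc Quot M)" using rq rne field.field_Units[OF F] by blast
  then obtain Y where Y: "Y \<in> carrier (Kcirc Quot M)"
    and Yr: "Y \<otimes>\<^bsub>Kcirc Quot M\<^esub> (M +>\<^bsub>Kcirc\<^esub> ?r) = \<one>\<^bsub>Kcirc Quot M\<^esub>"
    unfolding Units_def by blast
  obtain s where s: "s \<in> carrier Kcirc" and Ys: "Y = M +>\<^bsub>Kcirc\<^esub> s"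
    using Y unfolding FactRing_def A_RCOSETS_def' by auto
  have "M +>\<^bsub>Kcirc\<^esub> (s \<otimes>\<^bsub>Kcirc\<^esub> ?r) = M +>\<^bsub>Kcirc\<^esub> \<one>\<^bsub>Kcirc\<^esub>"
  proof -
    have m: "[mod M:] (M +>\<^bsub>Kcirc\<^esub> s) \<Otimes>\<^bsub>Kcirc\<^esub> (M +>\<^bsub>Kcirc\<^esub> ?r) = M +>\<^bsub>Kcirc\<^esub> (s \<otimes>\<^bsub>Kcirc\<^esub> ?r)"
      by (rule rcoset_mult_add[OF s r])
    show ?thesis using Yr m unfolding Ys by (simp add: FactRing_def del: Kcirc_simps)
  qed
  hence sr1: "(s \<otimes>\<^bsub>Kcirc\<^esub> ?r) \<ominus>\<^bsub>Kcirc\<^esub> \<one>\<^bsub>Kcirc\<^esub> \<in> M"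
    using R.quotient_eq_iff_same_a_r_cos[OF is_ideal] s r by (simp add: Kcirc_mult_closed const_in_Kcirc)
  define s' where "s' = \<ominus>\<^bsub>Kcirc\<^esub> s"
  have s': "s' \<in> carrier Kcirc" unfolding s'_def by (rule R.a_inv_closed[OF s])
  define u where "u = \<one>\<^bsub>Kcirc\<^esub> \<oplus>\<^bsub>Kcirc\<^esub> s' \<otimes>\<^bsub>Kcirc\<^esub> ?r"
  have "u = \<ominus>\<^bsub>Kcirc\<^esub> ((s \<otimes>\<^bsub>Kcirc\<^esub> ?r) \<ominus>\<^bsub>Kcirc\<^esub> \<one>\<^bsub>Kcirc\<^esub>)"
    unfolding u_def s'_def using s r
    by (simp add: a_minus_def R.minus_add R.l_minus R.a_comm R.minus_minus del: Kcirc_simps)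
  hence uM: "u \<in> M" using sr1 by (simp add: a_inv_closed)
  obtain p where p: "valid p" "pdom (fst p) (snd p)" "s' = frac_class p"
    using s' unfolding Kcirc_simps Kcirc_set_iff by blast
  obtain h' G' where hG: "p = (h', G')" by (cases p)
  have G'0: "G' \<noteq> ps_zero" using p hG by (simp add: valid_def)
  have d': "pdom h' G'" using p hG by simp
  define N where "N = ps_add (ps_mult G' G) (ps_mult h' H)"
  define D where "D = ps_mult G' G"
  have N0: "N \<noteq> ps_zero" and dDN: "pdom D N"
    using unit_aux[OF v G'0 d d' kill] by (simp_all add: N_def D_def)
  have vDN: "valid (D, N)" using N0 by (simp add: valid_def)
  define w where "w = frac_class (D, N)"
  have w: "w \<in> carrier Kcirc" using class_in_Kcirc[OF vDN] dDN by (simp add: w_def)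
  have u: "u \<in> carrier Kcirc" using s' r by (simp add: u_def Kcirc_add_closed Kcirc_mult_closed const_in_Kcirc)
  have uw: "u \<otimes>\<^bsub>Kcirc\<^esub> w = \<one>\<^bsub>Kcirc\<^esub>"
  proof -
    have L: "u \<in> laurent_set" "w \<in> laurent_set" "s' \<in> laurent_set" "?r \<in> laurent_set"
      using u w s' r by (simp_all add: Kcirc_in_laurent)
    have PSD: "PS D \<noteq> 0" "PS N \<noteq> 0" "PS G \<noteq> 0" "PS G' \<noteq> 0"
      using N0 v G'0 by (simp_all add: PS_zero_iff D_def ps_mult_nonzero)
    have "phi u = 1 + phi s' * phi ?r"
      unfolding u_def using L s' r
      by (simp add: laurent_add laurent_mult Kcirc_in_laurent const_in_Kcirc Kcirc_mult_closed phi_one)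
    also have "\<dots> = Fract (PS N) (PS D)"
      using p hG PSD vr by (simp add: phi_class FF_def N_def D_def PS_add PS_mult One_fract_def)
    finally have pu: "phi u = Fract (PS N) (PS D)" .
    have pw: "phi w = Fract (PS D) (PS N)" by (simp add: w_def phi_class vDN FF_def)
    show ?thesis
    proof (simp, rule phi_inj)
      show "frac_mult u w \<in> laurent_set" using L by (simp add: laurent_mult)
      show "frac_of_const 1 \<in> laurent_set" by (simp add: Kcirc_in_laurent const_in_Kcirc)
      show "phi (frac_mult u w) = phi (frac_of_const 1)"
        using L PSD by (simp add: laurent_mult pu pw phi_one mult.commute Fract_self)
    qed
  qed
  have "\<one>\<^bsub>Kcirc\<^esub> \<in> M" using I_r_closed[OF uM w] uw by simp
  hence "M = carrier Kcirc" by (rule one_imp_carrier)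
  thus False using I_notcarr by simp
qed

lemma main_surj:
  fixes M :: "('n::finite, 'k::field) kel set"
  assumes max: "maximalideal M Kcirc" and x: "x \<in> Kcirc_set"
  shows "\<exists>c. x \<ominus>\<^bsub>Kcirc\<^esub> frac_of_const c \<in> M"
proof -
  interpret R: cring "Kcirc :: ('n, 'k) kel ring" by (rule cring_Kcirc)
  interpret maximalideal M "Kcirc :: ('n, 'k) kel ring" by (rule max)
  have prime: "primeideal M (Kcirc :: ('n, 'k) kel ring)" by (rule R.maximalideal_prime[OF max])
  obtain f g where g0: "g \<noteq> ps_zero" and dfg: "pdom f g" and xe: "x = frac_class (f, g)"
    using x unfolding Kcirc_set_iff valid_def by auto
  have vg: "valid (f, g)" using g0 by (simp add: valid_def)
  define W where "W = vert (psupp g)"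
  have Wfin: "finite W" by (simp add: W_def finite_vert)
  have Wne: "W \<noteq> {}" unfolding W_def by (rule vert_nonempty) (use g0 psupp_empty_iff in blast)
  have Wsub: "W \<subseteq> psupp g" unfolding W_def by (rule vert_sub)
  define cw where "cw w = f w / g w" for w
  define hw where "hw w = (\<lambda>e. f e - cw w * g e)" for w
  have hw_dom: "pdom (hw w) g" for w
    unfolding hw_def by (rule pd_diff[OF dfg pd_smult[OF pd_self]])
  have hw_zero: "hw w w = 0" if "w \<in> W" for w
  proof -
    have "g w \<noteq> 0" using that Wsub by (auto simp: psupp_def)
    thus ?thesis by (simp add: hw_def cw_def)
  qed
  have hw_in: "frac_class (hw w, g) \<in> carrier Kcirc" for w
    using class_in_Kcirc[of "(hw w, g)"] vg hw_dom by (simp add: valid_def)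
  have hw_eq: "x \<ominus>\<^bsub>Kcirc\<^esub> frac_of_const (cw w) = frac_class (hw w, g)" for w
  proof -
    let ?y = "frac_class (hw w, g)" and ?c = "frac_of_const (cw w)"
    have y: "?y \<in> carrier Kcirc" by (rule hw_in)
    have c: "?c \<in> carrier Kcirc" by (simp add: const_in_Kcirc)
    have PSg: "PS g \<noteq> 0" using g0 by (simp add: PS_zero_iff)
    have sum: "ps_add (hw w) (\<lambda>e. cw w * g e) = f" by (simp add: ps_add_def hw_def fun_eq_iff)
    have "?y \<oplus>\<^bsub>Kcirc\<^esub> ?c = x"
    proof (simp, rule phi_inj)
      show "frac_add ?y ?c \<in> laurent_set" using y c by (intro Kcirc_in_laurent Kcirc_add_closed) simp_all
      show "x \<in> laurent_set" using x by (rule Kcirc_in_laurent)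
      have "phi (frac_add ?y ?c) = Fract (PS (hw w)) (PS g) + Fract (PS (ps_const (cw w))) 1"
      proof -
        have Ly: "?y \<in> laurent_set" by (rule Kcirc_in_laurent) (use y in simp)
        have Lc: "?c \<in> laurent_set" by (rule Kcirc_in_laurent) (rule const_in_Kcirc)
        have "valid (hw w, g)" using g0 by (simp add: valid_def)
        thus ?thesis unfolding laurent_add(2)[OF Ly Lc] by (simp add: phi_class phi_const FF_def)
      qed
      also have "\<dots> = Fract (PS f) (PS g)"
      proof -
        have cm: "PS g * PS (ps_const (cw w)) = PS (\<lambda>e. cw w * g e)" by (metis PS_const_mult mult.commute)
        show ?thesis using PSg by (simp add: cm PS_const_mult sum[symmetric] PS_add)
      qed
      also have "\<dots> = phi x" by (simp add: xe phi_class vg FF_def)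
      finally show "phi (frac_add ?y ?c) = phi x" .
    qed
    hence "x \<ominus>\<^bsub>Kcirc\<^esub> ?c = (?y \<oplus>\<^bsub>Kcirc\<^esub> ?c) \<ominus>\<^bsub>Kcirc\<^esub> ?c" by simp
    also have "\<dots> = (?y \<oplus>\<^bsub>Kcirc\<^esub> ?c) \<oplus>\<^bsub>Kcirc\<^esub> (\<ominus>\<^bsub>Kcirc\<^esub> ?c)" by (simp only: a_minus_def)
    also have "\<dots> = ?y \<oplus>\<^bsub>Kcirc\<^esub> (?c \<oplus>\<^bsub>Kcirc\<^esub> (\<ominus>\<^bsub>Kcirc\<^esub> ?c))"
      by (rule R.a_assoc[OF y c R.a_inv_closed[OF c]])
    also have "\<dots> = ?y" by (simp only: R.r_neg[OF c] R.r_zero[OF y])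
    finally show ?thesis .
  qed
  have inv: "\<exists>H. pdom H (gp g (card U))
      \<and> (\<forall>v\<in>vert (psupp (gp g (card U))). \<forall>a\<in>U. v = nsc (card U) a \<longrightarrow> H v = 0)
      \<and> (frac_class (H, gp g (card U)) \<in> M \<longrightarrow> (\<exists>w\<in>U. frac_class (hw w, g) \<in> M))"
    if "finite U" "U \<subseteq> W" for U
    using that
  proof (induction rule: finite_subset_induct)
    case empty
    have "frac_class (ps_const 1, ps_const 1) \<notin> M"
    proof
      assume "frac_class (ps_const 1, ps_const 1) \<in> M"
      hence "\<one>\<^bsub>Kcirc\<^esub> \<in> M" by (simp add: frac_of_const_def)
      hence "M = carrier Kcirc" by (rule one_imp_carrier)
      thus False using I_notcarr by simp
    qed
    thus ?case by (intro exI[of _ "ps_const 1"]) (simp add: pd_self)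
  next
    case (insert w U)
    obtain H where dH: "pdom H (gp g (card U))"
      and kH: "\<forall>v\<in>vert (psupp (gp g (card U))). \<forall>a\<in>U. v = nsc (card U) a \<longrightarrow> H v = 0"
      and mH: "frac_class (H, gp g (card U)) \<in> M \<longrightarrow> (\<exists>w\<in>U. frac_class (hw w, g) \<in> M)"
      using insert.IH by blast
    define n where "n = card U"
    have cardi: "card (insert w U) = Suc n" using insert.hyps by (simp add: n_def)
    define H' where "H' = ps_mult H (hw w)"
    have dH': "pdom H' (gp g (Suc n))" unfolding H'_def n_def using pd_mult[OF dH hw_dom] by simp
    have kH': "H' v = 0" if v: "v \<in> vert (psupp (gp g (Suc n)))" and a: "a \<in> insert w U"
      and va: "v = nsc (Suc n) a" for v a
    proof (rule ccontr)
      assume nz: "H' v \<noteq> 0"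
      have v': "v \<in> vert (psupp (ps_mult (gp g n) g))" using v by simp
      obtain x y where xy: "v = x + y" "H x \<noteq> 0" "hw w y \<noteq> 0" "x \<in> vert (psupp (gp g n))" "y \<in> W"
        using vertex_decomp[OF dH[folded n_def] hw_dom v'] nz unfolding H'_def W_def by metis
      obtain b where b: "b \<in> W" "x = nsc n b" using gp_vert[OF Wne[unfolded W_def] xy(4)] W_def by blast
      show False
      proof (cases "n = 0")
        case True
        hence "U = {}" using insert.hyps(1) by (simp add: n_def)
        hence aw: "a = w" using a by simp
        have "v = y" using xy b True by (simp add: nsc_0)
        moreover have "v = a" using va True by (simp add: nsc_def)
        ultimately have "y = w" using aw by simp
        thus False using xy(3) hw_zero[OF insert.hyps(2)] by simp
      next
        case False
        have "b = y"
          by (rule scale_eq[OF v _ _ _ ]) (use False b xy Wsub in auto)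
        hence "v = nsc (Suc n) y" using xy b by (simp add: nsc_Suc add.commute)
        hence ay: "a = y" using va nsc_inj by (metis zero_less_Suc)
        show False
        proof (cases "a = w")
          case True thus False using xy(3) hw_zero[OF insert.hyps(2)] ay by simp
        next
          case aw: False
          hence "a \<in> U" using a by simp
          moreover have "x = nsc n a" using b \<open>b = y\<close> ay by simp
          ultimately have "H x = 0" using kH xy(4) by (simp add: n_def)
          thus False using xy(2) by simp
        qed
      qed
    qed
    have mH': "\<exists>w'\<in>insert w U. frac_class (hw w', g) \<in> M" if inM: "frac_class (H', gp g (Suc n)) \<in> M"
    proof -
      have vgn: "valid (H, gp g n)" using gp_nonzero[OF g0] by (simp add: valid_def)
      have vhw: "valid (hw w, g)" using g0 by (simp add: valid_def)
      have e: "frac_class (H', gp g (Suc n)) = frac_mult (frac_class (H, gp g n)) (frac_class (hw w, g))"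
        using frac_mult_class[OF vgn vhw] by (simp add: multp_def H'_def)
      have c1: "frac_class (H, gp g n) \<in> carrier Kcirc"
        using class_in_Kcirc[OF vgn] dH by (simp add: n_def)
      have "frac_class (H, gp g n) \<in> M \<or> frac_class (hw w, g) \<in> M"
        using primeideal.I_prime[OF prime c1 hw_in] inM e by simp
      thus ?thesis using mH by (auto simp: n_def)
    qed
    show ?case unfolding cardi
      by (intro exI[of _ H'] conjI dH' ballI impI mH') (auto intro: kH')
  qed
  obtain H where dH: "pdom H (gp g (card W))"
    and kH: "\<forall>v\<in>vert (psupp (gp g (card W))). \<forall>a\<in>W. v = nsc (card W) a \<longrightarrow> H v = 0"
    and mH: "frac_class (H, gp g (card W)) \<in> M \<longrightarrow> (\<exists>w\<in>W. frac_class (hw w, g) \<in> M)"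
    using inv[OF Wfin order_refl] by blast
  have kill: "\<forall>a\<in>vert (psupp (gp g (card W))). H a = 0"
  proof
    fix v assume v: "v \<in> vert (psupp (gp g (card W)))"
    obtain a where "a \<in> W" "v = nsc (card W) a" using gp_vert[OF Wne[unfolded W_def] v] W_def by blast
    thus "H v = 0" using kH v by blast
  qed
  have "frac_class (H, gp g (card W)) \<in> M"
    by (rule small_in_M[OF max gp_nonzero[OF g0] dH kill])
  then obtain w where "frac_class (hw w, g) \<in> M" using mH by blast
  thus ?thesis using hw_eq by metis
qed

lemma foc_diff:
  "frac_of_const c \<ominus>\<^bsub>Kcirc\<^esub> frac_of_const d =
   (frac_of_const (c - d) :: ('n::finite, 'k::field) kel)"
proof -
  interpret R: cring "Kcirc :: ('n, 'k) kel ring" by (rule cring_Kcirc)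
  let ?a = "frac_of_const (c - d) :: ('n, 'k) kel" and ?d = "frac_of_const d :: ('n, 'k) kel"
  have a: "?a \<in> carrier Kcirc" and dd: "?d \<in> carrier Kcirc" by (simp_all add: const_in_Kcirc)
  have "frac_of_const c = ?a \<oplus>\<^bsub>Kcirc\<^esub> ?d" using foc_add[of "c - d" d] by simp
  hence "frac_of_const c \<ominus>\<^bsub>Kcirc\<^esub> ?d = (?a \<oplus>\<^bsub>Kcirc\<^esub> ?d) \<oplus>\<^bsub>Kcirc\<^esub> (\<ominus>\<^bsub>Kcirc\<^esub> ?d)"
    by (simp only: a_minus_def)
  also have "\<dots> = ?a \<oplus>\<^bsub>Kcirc\<^esub> (?d \<oplus>\<^bsub>Kcirc\<^esub> (\<ominus>\<^bsub>Kcirc\<^esub> ?d))"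
    by (rule R.a_assoc[OF a dd R.a_inv_closed[OF dd]])
  also have "\<dots> = ?a" by (simp only: R.r_neg[OF dd] R.r_zero[OF a])
  finally show ?thesis .
qed

theorem corollary4p9:
  fixes M :: "(('n::finite, 'k::field_char_0) mps \<times> ('n, 'k) mps) set set"
  assumes "maximalideal M (Kcirc :: (('n, 'k) mps \<times> ('n, 'k) mps) set ring)"
  shows "(\<lambda>c. M +>\<^bsub>Kcirc\<^esub> frac_of_const c) \<in> ring_iso (type_ring :: 'k ring) (Kcirc Quot M)
         \<and> Kcirc Quot M \<simeq> (type_ring :: 'k ring)"
proof -
  interpret R: cring "Kcirc :: ('n, 'k) kel ring" by (rule cring_Kcirc)
  interpret maximalideal M "Kcirc :: ('n, 'k) kel ring" by (rule assms)
  let ?h = "\<lambda>c. M +>\<^bsub>Kcirc\<^esub> (frac_of_const c :: ('n, 'k) kel)"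
  have hom: "?h \<in> ring_hom (type_ring :: 'k ring) (Kcirc Quot M)"
  proof -
    have "(a_r_coset Kcirc M) \<circ> frac_of_const \<in> ring_hom (type_ring :: 'k ring) (Kcirc Quot M)"
      by (rule ring_hom_trans[OF foc_hom rcos_ring_hom])
    thus ?thesis by (simp add: comp_def)
  qed
  have inj: "inj_on ?h (carrier (type_ring :: 'k ring))"
  proof (rule inj_onI)
    fix c d :: 'k assume "?h c = ?h d"
    hence "frac_of_const c \<ominus>\<^bsub>Kcirc\<^esub> frac_of_const d \<in> M"
      using R.quotient_eq_iff_same_a_r_cos[OF is_ideal, of "frac_of_const c" "frac_of_const d"]
      by (simp add: const_in_Kcirc)
    hence cd: "(frac_of_const (c - d) :: ('n, 'k) kel) \<in> M" by (simp only: foc_diff)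
    show "c = d"
    proof (rule ccontr)
      assume "c \<noteq> d"
      have "frac_mult (frac_of_const (c - d)) (frac_of_const (1 / (c - d))) = (frac_of_const 1 :: ('n, 'k) kel)"
      proof -
        have fm: "(frac_of_const ((c - d) * (1 / (c - d))) :: ('n, 'k) kel) =
            frac_mult (frac_of_const (c - d)) (frac_of_const (1 / (c - d)))" by (rule foc_mult)
        have "(c - d) * (1 / (c - d)) = 1" using \<open>c \<noteq> d\<close> by simp
        thus ?thesis using fm by simp
      qed
      hence "\<one>\<^bsub>Kcirc\<^esub> \<in> M"
        using I_r_closed[OF cd, of "frac_of_const (1 / (c - d))"] by (simp add: const_in_Kcirc)
      hence "M = carrier Kcirc" by (rule one_imp_carrier)
      thus False using I_notcarr by simp
    qed
  qed
  have surj: "?h ` carrier (type_ring :: 'k ring) = carrier (Kcirc Quot M)"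
  proof
    show "?h ` carrier (type_ring :: 'k ring) \<subseteq> carrier (Kcirc Quot M)"
      using ring_hom_closed[OF hom] by blast
    show "carrier (Kcirc Quot M) \<subseteq> ?h ` carrier (type_ring :: 'k ring)"
    proof
      fix X assume "X \<in> carrier (Kcirc Quot M)"
      then obtain x where x: "x \<in> carrier Kcirc" and X: "X = M +>\<^bsub>Kcirc\<^esub> x"
        unfolding FactRing_def A_RCOSETS_def' by auto
      obtain c where "x \<ominus>\<^bsub>Kcirc\<^esub> frac_of_const c \<in> M"
        using main_surj[OF assms, of x] x by auto
      hence "M +>\<^bsub>Kcirc\<^esub> x = M +>\<^bsub>Kcirc\<^esub> frac_of_const c"
        using R.quotient_eq_iff_same_a_r_cos[OF is_ideal x, of "frac_of_const c"]
        by (simp add: const_in_Kcirc)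
      thus "X \<in> ?h ` carrier (type_ring :: 'k ring)" using X by simp
    qed
  qed
  have iso: "?h \<in> ring_iso (type_ring :: 'k ring) (Kcirc Quot M)"
    unfolding ring_iso_def bij_betw_def using hom inj surj by blast
  moreover have "Kcirc Quot M \<simeq> (type_ring :: 'k ring)"
    by (rule ring_iso_sym[OF ring_type_ring]) (use iso in \<open>auto simp: is_ring_iso_def\<close>)
  ultimately show ?thesis by blast
qed

end
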